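(* Assume $d_k=\max_{\alpha\in\mathbb R^k,\beta\in\mathbb R^m_+}f(\alpha,\beta)$ is finite. Let $(\kappa_t)_{t\ge1}$ be positive step sizes with $\lim_{t\to\infty}\kappa_t=0$ and $\sum_t\kappa_t=\infty$, and consider the iteration started from any $\alpha_0\in\mathbb R^k$, $\beta_0\in\mathbb R^m_+$, $z_0=\mathds 1_n(\mathcal J(\alpha_0,\beta_0))$: $$\alpha_{t+1}=(1-\tfrac12\kappa_t)\alpha_t-\tfrac12\eta\kappa_t\sqrt\Lambda V^\top\mathrm{diag}(z_t)(c+V\sqrt\Lambda\alpha_t+A^\top\beta_t),$$ $$\beta_{t+1}=\max\Big\{0,\ \beta_t-\kappa_t b-\tfrac12\eta\kappa_t A\,\mathrm{diag}(z_t)(c+V\sqrt\Lambda\alpha_t+A^\top\beta_t)\Big\}\ \text{(componentwise max)},$$ $$z_{t+1}=\mathds 1_n(\mathcal J(\alpha_{t+1},\beta_{t+1})).$$ Then $\lim_{t\to\infty}f(\alpha_t,\beta_t)=d_k$. Moreover, if $z_t$ converges (i.e. is eventually constant) to some $z^\star$, then $z^\star$ is an optimal solution of $\min_{z\in\mathcal Z_s}\max_{\alpha\in\mathbb R^k,\beta\in\mathbb R^m_+}L(z,\alpha,\beta)$ and $d_k=J^\star_k$ (zero duality gap).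
   Context: Let $Q\in\mathbb R^{n\times n}$ be symmetric positive semidefinite with eigendecomposition $Q=\sum_{i=1}^n\lambda_i v_iv_i^\top$, $\lambda_1\ge\cdots\ge\lambda_n\ge0$, $\{v_i\}$ orthonormal. Let $c\in\mathbb R^n$, $A\in\mathbb R^{m\times n}$, $b\in\mathbb R^m$, $\eta>0$, $s\le n$ a positive integer, $k\le n$, $V=[v_1,\dots,v_k]$, $\Lambda=\mathrm{diag}(\lambda_1,\dots,\lambda_k)$. Let $\mathcal Z_s=\{z\in\{0,1\}^n:\sum_j z_j\le s\}$ and $$L(z,\alpha,\beta)=-\beta^\top b-\tfrac14\|\alpha\|_2^2-\tfrac{\eta}{4}(c+V\sqrt\Lambda\alpha+A^\top\beta)^\top\mathrm{diag}(z)(c+V\sqrt\Lambda\alpha+A^\top\beta),$$ $f(\alpha,\beta)=\min_{z\in\mathcal Z_s}L(z,\alpha,\beta)$, and $J^\star_k=\min_{z\in\mathcal Z_s}\max_{\alpha\in\mathbb R^k,\beta\in\mathbb R^m_+}L(z,\alpha,\beta)$ (equivalently the optimal value of $\min\ \langle c,x\rangle+\sum_{i\le k}\lambda_i\langle v_i,x\rangle^2+\eta^{-1}\|x\|_2^2$ s.t. $Ax\le b$, $\|x\|_0\le s$). For $(\alpha,\beta)$, let $\gamma=c+V\sqrt\Lambda\alpha+A^\top\beta$ and let $\mathcal J(\alpha,\beta)\subseteq[n]$ be the set of $s$ indices with the $s$ largest values of $|\gamma_j|$, ties broken by a fixed deterministic rule; $\mathds 1_n(\mathcal J)$ is its indicator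 vector. *)

theory Defs
  imports "HOL-Analysis.Analysis" "HOL-Library.Extended_Real"
begin

(* Conventions: all vectors/matrices are nat-indexed functions, 0-based.
   Vectors in R^n: nat => real, only components < n are meaningful.
   Eigenvector v_i (i < n) has components  v i j  (j < n).
   A :: m x n matrix, entry  A i j  (i < m, j < n).
   alpha in R^k uses components < k, beta in R^m uses components < m.
   z in {0,1}^n is represented as nat => real vanishing outside {..<n}. *)

definition gam :: "nat \<Rightarrow> nat \<Rightarrow> (nat \<Rightarrow> real) \<Rightarrow> (nat \<Rightarrow> nat \<Rightarrow> real)
    \<Rightarrow> (nat \<Rightarrow> nat \<Rightarrow> real) \<Rightarrow> (nat \<Rightarrow> real)
    \<Rightarrow> (nat \<Rightarrow> real) \<Rightarrow> (nat \<Rightarrow> real) \<Rightarrow> nat \<Rightarrow> real" where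
  "gam k m lam v A c \<alpha> \<beta> j =
     c j + (\<Sum>i<k. v i j * sqrt (lam i) * \<alpha> i) + (\<Sum>i<m. A i j * \<beta> i)"

definition Zs :: "nat \<Rightarrow> nat \<Rightarrow> (nat \<Rightarrow> real) set" where
  "Zs n s = {z. (\<forall>j. z j \<in> {0, 1}) \<and> (\<forall>j\<ge>n. z j = 0) \<and> (\<Sum>j<n. z j) \<le> real s}"

definition Lfun :: "nat \<Rightarrow> nat \<Rightarrow> nat \<Rightarrow> (nat \<Rightarrow> real) \<Rightarrow> (nat \<Rightarrow> nat \<Rightarrow> real)
    \<Rightarrow> (nat \<Rightarrow> nat \<Rightarrow> real) \<Rightarrow> (nat \<Rightarrow> real) \<Rightarrow> (nat \<Rightarrow> real) \<Rightarrow> real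
    \<Rightarrow> (nat \<Rightarrow> real) \<Rightarrow> (nat \<Rightarrow> real) \<Rightarrow> (nat \<Rightarrow> real) \<Rightarrow> real" where
  "Lfun n m k lam v A b c \<eta> z \<alpha> \<beta> =
     - (\<Sum>i<m. \<beta> i * b i) - (\<Sum>i<k. (\<alpha> i)\<^sup>2) / 4
     - \<eta> / 4 * (\<Sum>j<n. z j * (gam k m lam v A c \<alpha> \<beta> j)\<^sup>2)"

definition dual_feas :: "nat \<Rightarrow> ((nat \<Rightarrow> real) \<times> (nat \<Rightarrow> real)) set" where
  "dual_feas m = {(\<alpha>, \<beta>). \<forall>i<m. 0 \<le> \<beta> i}"

definition fdual :: "nat \<Rightarrow> nat \<Rightarrow> nat \<Rightarrow> nat \<Rightarrow> (nat \<Rightarrow> real) \<Rightarrow> (nat \<Rightarrow> nat \<Rightarrow> real)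
    \<Rightarrow> (nat \<Rightarrow> nat \<Rightarrow> real) \<Rightarrow> (nat \<Rightarrow> real) \<Rightarrow> (nat \<Rightarrow> real) \<Rightarrow> real
    \<Rightarrow> (nat \<Rightarrow> real) \<Rightarrow> (nat \<Rightarrow> real) \<Rightarrow> real" where
  "fdual n m k s lam v A b c \<eta> \<alpha> \<beta> =
     Min ((\<lambda>z. Lfun n m k lam v A b c \<eta> z \<alpha> \<beta>) ` Zs n s)"

text \<open>d_k = max over dual feasible (alpha, beta) of f (as a supremum; attainment is assumed
  separately in the theorem)\<close>
definition dval :: "nat \<Rightarrow> nat \<Rightarrow> nat \<Rightarrow> nat \<Rightarrow> (nat \<Rightarrow> real) \<Rightarrow> (nat \<Rightarrow> nat \<Rightarrow> real)
    \<Rightarrow> (nat \<Rightarrow> nat \<Rightarrow> real) \<Rightarrow> (nat \<Rightarrow> real) \<Rightarrow> (nat \<Rightarrow> real) \<Rightarrow> real \<Rightarrow> real" where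
  "dval n m k s lam v A b c \<eta> =
     (SUP p\<in>dual_feas m. fdual n m k s lam v A b c \<eta> (fst p) (snd p))"

text \<open>Inner value max over (alpha, beta) of L(z, alpha, beta), in the extended reals
  (it may be +infinity)\<close>
definition inner_val :: "nat \<Rightarrow> nat \<Rightarrow> nat \<Rightarrow> (nat \<Rightarrow> real) \<Rightarrow> (nat \<Rightarrow> nat \<Rightarrow> real)
    \<Rightarrow> (nat \<Rightarrow> nat \<Rightarrow> real) \<Rightarrow> (nat \<Rightarrow> real) \<Rightarrow> (nat \<Rightarrow> real) \<Rightarrow> real
    \<Rightarrow> (nat \<Rightarrow> real) \<Rightarrow> ereal" where
  "inner_val n m k lam v A b c \<eta> z =
     (SUP p\<in>dual_feas m. ereal (Lfun n m k lam v A b c \<eta> z (fst p) (snd p)))"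

definition Jstar :: "nat \<Rightarrow> nat \<Rightarrow> nat \<Rightarrow> nat \<Rightarrow> (nat \<Rightarrow> real) \<Rightarrow> (nat \<Rightarrow> nat \<Rightarrow> real)
    \<Rightarrow> (nat \<Rightarrow> nat \<Rightarrow> real) \<Rightarrow> (nat \<Rightarrow> real) \<Rightarrow> (nat \<Rightarrow> real) \<Rightarrow> real \<Rightarrow> ereal" where
  "Jstar n m k s lam v A b c \<eta> =
     (INF z\<in>Zs n s. inner_val n m k lam v A b c \<eta> z)"

end

theory Submission imports Defs begin


lemma bw_fin:
  fixes X :: "nat \<Rightarrow> nat \<Rightarrow> real"
  assumes "\<forall>j. \<forall>i<N. \<bar>X j i\<bar> \<le> B"
  shows "\<exists>r l. strict_mono r \<and> (\<forall>i<N. (\<lambda>j. X (r j) i) \<longlonglongrightarrow> l i)"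
  using assms
proof (induction N)
  case 0
  show ?case by (rule exI[of _ id]) (auto simp: strict_mono_def)
next
  case (Suc N)
  then obtain r1 l1 where r1: "strict_mono r1" and l1: "\<forall>i<N. (\<lambda>j. X (r1 j) i) \<longlonglongrightarrow> l1 i" by auto
  have "bounded (range (\<lambda>j. X (r1 j) N))"
    unfolding bounded_iff using Suc.prems by (intro exI[of _ B]) auto
  then obtain l2 r2 where r2: "strict_mono r2" and l2: "((\<lambda>j. X (r1 j) N) \<circ> r2) \<longlonglongrightarrow> l2"
    using bounded_imp_convergent_subsequence by blast
  show ?case
  proof (intro exI conjI allI impI)
    show "strict_mono (r1 \<circ> r2)" using r1 r2 by (rule strict_mono_o)
    fix i assume i: "i < Suc N"
    show "(\<lambda>j. X ((r1 \<circ> r2) j) i) \<longlonglongrightarrow> (l1(N := l2)) i"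
    proof (cases "i = N")
      case True then show ?thesis using l2 by (simp add: o_def)
    next
      case False
      then have "i < N" using i by simp
      then have "((\<lambda>j. X (r1 j) i) \<circ> r2) \<longlonglongrightarrow> l1 i" using l1 r2 LIMSEQ_subseq_LIMSEQ by blast
      then show ?thesis using False by (simp add: o_def)
    qed
  qed
qed


lemma descent:
  fixes V \<kappa> :: "nat \<Rightarrow> real"
  assumes V0: "\<forall>t. 0 \<le> V t" and dec: "\<forall>t\<ge>T. V (Suc t) \<le> V t - \<kappa> t * e"
    and e: "0 < e" and kp: "\<forall>t. 0 < \<kappa> t" and nd: "\<not> summable \<kappa>"
  shows False
proof -
  have "V (T + j) \<le> V T - e * (\<Sum>i<j. \<kappa> (i + T))" for j
  proof (induction j)
    case 0 then show ?case by simp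
  next
    case (Suc j)
    have "V (T + Suc j) \<le> V (T + j) - \<kappa> (T + j) * e" using dec by (simp add: add.commute)
    also have "\<dots> \<le> V T - e * (\<Sum>i<j. \<kappa> (i + T)) - \<kappa> (T + j) * e" using Suc.IH by simp
    also have "\<dots> = V T - e * (\<Sum>i<Suc j. \<kappa> (i + T))" by (simp add: algebra_simps add.commute)
    finally show ?case .
  qed
  then have "(\<Sum>i<j. \<kappa> (i + T)) \<le> V T / e" for j
    using V0 e by (smt (verit) mult.commute pos_le_divide_eq)
  then have "summable (\<lambda>i. \<kappa> (i + T))"
    by (intro summableI_nonneg_bounded[where x = "V T / e"]) (use kp in \<open>auto intro: less_imp_le\<close>)
  then show False using nd summable_iff_shift by blast
qed

locale prob =
  fixes n m k s :: nat and lam :: "nat \<Rightarrow> real" and v A :: "nat \<Rightarrow> nat \<Rightarrow> real"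
    and b c :: "nat \<Rightarrow> real" and \<eta> :: real
  assumes eta_pos: "0 < \<eta>" and s_pos: "0 < s" and s_le: "s \<le> n"
begin

abbreviation "gm \<equiv> gam k m lam v A c"
abbreviation "L \<equiv> Lfun n m k lam v A b c \<eta>"
abbreviation "F \<equiv> fdual n m k s lam v A b c \<eta>"

lemma Zs_sub: "Zs n s \<subseteq> (\<lambda>S. indicator S) ` Pow {..<n}"
proof
  fix z assume z: "z \<in> Zs n s"
  have "z = indicator {j. z j = 1}"
  proof
    fix j show "z j = indicator {j. z j = 1} j" using z unfolding Zs_def by (auto simp: indicator_def)
  qed
  moreover have "{j. z j = 1} \<subseteq> {..<n}" using z unfolding Zs_def by (auto simp: not_less[symmetric])
  ultimately show "z \<in> (\<lambda>S. indicator S) ` Pow {..<n}" by blast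
qed

lemma Zs_finite: "finite (Zs n s)"
  by (rule finite_subset[OF Zs_sub]) auto

lemma zero_Zs: "(\<lambda>_. 0) \<in> Zs n s"
  unfolding Zs_def by auto

lemma F_le: "z \<in> Zs n s \<Longrightarrow> F \<alpha> \<beta> \<le> L z \<alpha> \<beta>"
  unfolding fdual_def by (rule Min_le) (auto simp: Zs_finite)

lemma F_att: "\<exists>z\<in>Zs n s. F \<alpha> \<beta> = L z \<alpha> \<beta>"
proof -
  have "F \<alpha> \<beta> \<in> (\<lambda>z. L z \<alpha> \<beta>) ` Zs n s"
    unfolding fdual_def by (rule Min_in) (use Zs_finite zero_Zs in auto)
  thus ?thesis by auto
qed

lemma ind_Zs: assumes "J \<subseteq> {..<n}" "card J \<le> s" shows "indicator J \<in> Zs n s"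
proof -
  have fin: "finite J" using assms(1) finite_subset by blast
  have "(\<Sum>j<n. indicator J j :: real) = real (card J)"
  proof -
    have "(\<Sum>j<n. indicator J j :: real) = (\<Sum>j\<in>{..<n} \<inter> J. 1)"
      by (simp add: indicator_def sum.If_cases)
    also have "{..<n} \<inter> J = J" using assms(1) by auto
    finally show ?thesis by simp
  qed
  then show ?thesis using assms unfolding Zs_def by (auto simp: indicator_def)
qed

lemma sum_top:
  fixes w :: "nat \<Rightarrow> real"
  assumes J: "J \<subseteq> {..<n}" and Z: "Z \<subseteq> {..<n}" and cZ: "card Z \<le> card J"
    and w0: "\<forall>j. 0 \<le> w j"
    and dom: "\<forall>i\<in>J. \<forall>j\<in>{..<n}-J. w j \<le> w i"
  shows "sum w Z \<le> sum w J"
proof -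
  have fJ: "finite J" and fZ: "finite Z" using J Z finite_subset by blast+
  have c: "card (Z - J) \<le> card (J - Z)"
  proof -
    have "card (Z - J) = card Z - card (Z \<inter> J)" using fZ by (simp add: card_Diff_subset_Int Int_commute)
    moreover have "card (J - Z) = card J - card (J \<inter> Z)" using fJ by (simp add: card_Diff_subset_Int Int_commute)
    ultimately show ?thesis using cZ by (simp add: Int_commute)
  qed
  have key: "sum w (Z - J) \<le> sum w (J - Z)"
  proof (cases "J - Z = {}")
    case True
    then have "card (Z - J) = 0" using c by (metis card.empty le_zero_eq)
    then have "Z - J = {}" using fZ by simp
    then show ?thesis using True by simp
  next
    case False
    define \<mu> where "\<mu> = Min (w ` (J - Z))"
    have fin: "finite (J - Z)" using fJ by simp
    have "sum w (Z - J) \<le> sum (\<lambda>_. \<mu>) (Z - J)"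
    proof (rule sum_mono)
      fix j assume j: "j \<in> Z - J"
      have "\<mu> \<in> w ` (J - Z)" unfolding \<mu>_def using fin False by (intro Min_in) auto
      then obtain i where i: "i \<in> J - Z" "\<mu> = w i" by auto
      show "w j \<le> \<mu>" using dom i j Z by auto
    qed
    also have "\<dots> = real (card (Z - J)) * \<mu>" by simp
    also have "\<dots> \<le> real (card (J - Z)) * \<mu>"
    proof (rule mult_right_mono)
      show "0 \<le> \<mu>" unfolding \<mu>_def using fin False w0 by (subst Min_ge_iff) auto
    qed (use c in simp)
    also have "\<dots> = sum (\<lambda>_. \<mu>) (J - Z)" by simp
    also have "\<dots> \<le> sum w (J - Z)"
      by (rule sum_mono) (unfold \<mu>_def, rule Min_le, use fin in auto)
    finally show ?thesis .
  qed
  have "sum w Z = sum w (Z \<inter> J) + sum w (Z - J)" using fZ by (metis sum.Int_Diff)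
  moreover have "sum w J = sum w (Z \<inter> J) + sum w (J - Z)" using fJ by (metis Int_commute sum.Int_Diff)
  ultimately show ?thesis using key by simp
qed

lemma topsel:
  assumes J: "J \<subseteq> {..<n}" "card J = s"
    and dom: "\<forall>i\<in>J. \<forall>j\<in>{..<n}-J. \<bar>gm \<alpha> \<beta> j\<bar> \<le> \<bar>gm \<alpha> \<beta> i\<bar>"
    and z: "z \<in> Zs n s"
  shows "L (indicator J) \<alpha> \<beta> \<le> L z \<alpha> \<beta>"
proof -
  define Z where "Z = {j. j < n \<and> z j = 1}"
  have Zn: "Z \<subseteq> {..<n}" unfolding Z_def by auto
  have zv: "\<And>j. z j = indicator Z j"
    using z unfolding Zs_def Z_def by (auto simp: indicator_def not_less[symmetric])
  have "(\<Sum>j<n. z j) = real (card Z)"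
  proof -
    have "(\<Sum>j<n. z j) = (\<Sum>j\<in>{..<n} \<inter> Z. 1)" by (simp add: zv indicator_def sum.If_cases)
    also have "{..<n} \<inter> Z = Z" using Zn by auto
    finally show ?thesis by simp
  qed
  then have cZ: "card Z \<le> card J" using z J unfolding Zs_def by auto
  define w where "w j = (gm \<alpha> \<beta> j)\<^sup>2" for j
  have dom': "\<forall>i\<in>J. \<forall>j\<in>{..<n}-J. w j \<le> w i"
    using dom unfolding w_def by (auto intro: abs_le_square_iff[THEN iffD1])
  have st: "sum w Z \<le> sum w J" by (rule sum_top[OF J(1) Zn cZ _ dom']) (simp add: w_def)
  have eq: "\<And>S. S \<subseteq> {..<n} \<Longrightarrow> (\<Sum>j<n. indicator S j * (gm \<alpha> \<beta> j)\<^sup>2) = sum w S"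
  proof -
    fix S :: "nat set" assume S: "S \<subseteq> {..<n}"
    have "(\<Sum>j<n. indicator S j * (gm \<alpha> \<beta> j)\<^sup>2) = (\<Sum>j\<in>{..<n} \<inter> S. w j)"
      by (simp add: indicator_def sum.If_cases w_def)
    also have "{..<n} \<inter> S = S" using S by auto
    finally show "(\<Sum>j<n. indicator S j * (gm \<alpha> \<beta> j)\<^sup>2) = sum w S" .
  qed
  have "(\<Sum>j<n. z j * (gm \<alpha> \<beta> j)\<^sup>2) \<le> (\<Sum>j<n. indicator J j * (gm \<alpha> \<beta> j)\<^sup>2)"
    using st eq[OF Zn] eq[OF J(1)] by (simp add: zv)
  then show ?thesis unfolding Lfun_def using eta_pos
    by (simp add: mult_left_mono)
qed

definition gA where
  "gA z \<alpha> \<beta> i = - \<alpha> i / 2 - \<eta> / 2 * sqrt (lam i) * (\<Sum>j<n. v i j * z j * gm \<alpha> \<beta> j)"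
definition gB where
  "gB z \<alpha> \<beta> i = - b i - \<eta> / 2 * (\<Sum>j<n. A i j * z j * gm \<alpha> \<beta> j)"
definition ip :: "(nat \<Rightarrow> real) \<Rightarrow> (nat \<Rightarrow> real) \<Rightarrow> (nat \<Rightarrow> real) \<Rightarrow> (nat \<Rightarrow> real) \<Rightarrow> real" where
  "ip ga gb da db = (\<Sum>i<k. ga i * da i) + (\<Sum>i<m. gb i * db i)"
definition nrm2 :: "(nat \<Rightarrow> real) \<Rightarrow> (nat \<Rightarrow> real) \<Rightarrow> real" where
  "nrm2 da db = (\<Sum>i<k. (da i)\<^sup>2) + (\<Sum>i<m. (db i)\<^sup>2)"
definition Qf where
  "Qf z \<alpha> \<beta> \<alpha>' \<beta>' = (\<Sum>i<k. (\<alpha>' i - \<alpha> i)\<^sup>2) / 4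
     + \<eta> / 4 * (\<Sum>j<n. z j * (gm \<alpha>' \<beta>' j - gm \<alpha> \<beta> j)\<^sup>2)"

lemma gam_diff: "gm \<alpha>' \<beta>' j - gm \<alpha> \<beta> j =
   (\<Sum>i<k. v i j * sqrt (lam i) * (\<alpha>' i - \<alpha> i)) + (\<Sum>i<m. A i j * (\<beta>' i - \<beta> i))"
  by (simp add: gam_def algebra_simps sum_subtractf)

lemma swap_lemma:
  "(\<Sum>i<k. sqrt (lam i) * (\<Sum>j<n. v i j * z j * gm \<alpha> \<beta> j) * (\<alpha>' i - \<alpha> i))
   + (\<Sum>i<m. (\<Sum>j<n. A i j * z j * gm \<alpha> \<beta> j) * (\<beta>' i - \<beta> i))
   = (\<Sum>j<n. z j * gm \<alpha> \<beta> j * (gm \<alpha>' \<beta>' j - gm \<alpha> \<beta> j))"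
proof -
  have "(\<Sum>j<n. z j * gm \<alpha> \<beta> j * (gm \<alpha>' \<beta>' j - gm \<alpha> \<beta> j))
     = (\<Sum>j<n. \<Sum>i<k. z j * gm \<alpha> \<beta> j * (v i j * sqrt (lam i) * (\<alpha>' i - \<alpha> i)))
     + (\<Sum>j<n. \<Sum>i<m. z j * gm \<alpha> \<beta> j * (A i j * (\<beta>' i - \<beta> i)))"
    by (simp add: gam_diff sum_distrib_left sum.distrib distrib_left)
  also have "\<dots> = (\<Sum>i<k. \<Sum>j<n. z j * gm \<alpha> \<beta> j * (v i j * sqrt (lam i) * (\<alpha>' i - \<alpha> i)))
     + (\<Sum>i<m. \<Sum>j<n. z j * gm \<alpha> \<beta> j * (A i j * (\<beta>' i - \<beta> i)))"
    by (simp add: sum.swap[of _ "{..<n}" "{..<k}"] sum.swap[of _ "{..<n}" "{..<m}"])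
  also have "\<dots> = (\<Sum>i<k. sqrt (lam i) * (\<Sum>j<n. v i j * z j * gm \<alpha> \<beta> j) * (\<alpha>' i - \<alpha> i))
   + (\<Sum>i<m. (\<Sum>j<n. A i j * z j * gm \<alpha> \<beta> j) * (\<beta>' i - \<beta> i))"
    by (simp add: sum_distrib_left sum_distrib_right mult_ac)
  finally show ?thesis by simp
qed

lemma QI: "L z \<alpha>' \<beta>' = L z \<alpha> \<beta> + ip (gA z \<alpha> \<beta>) (gB z \<alpha> \<beta>) (\<lambda>i. \<alpha>' i - \<alpha> i) (\<lambda>i. \<beta>' i - \<beta> i)
     - Qf z \<alpha> \<beta> \<alpha>' \<beta>'"
proof -
  define G where "G j = gm \<alpha> \<beta> j" for j
  define D where "D j = gm \<alpha>' \<beta>' j - gm \<alpha> \<beta> j" for j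
  have e1: "(\<Sum>i<k. (\<alpha>' i)\<^sup>2) = (\<Sum>i<k. (\<alpha> i)\<^sup>2) + 2 * (\<Sum>i<k. \<alpha> i * (\<alpha>' i - \<alpha> i)) + (\<Sum>i<k. (\<alpha>' i - \<alpha> i)\<^sup>2)"
    by (simp add: sum.distrib sum_distrib_left power2_eq_square algebra_simps sum_subtractf)
  have e2: "(\<Sum>j<n. z j * (gm \<alpha>' \<beta>' j)\<^sup>2) = (\<Sum>j<n. z j * (G j)\<^sup>2) + 2 * (\<Sum>j<n. z j * G j * D j) + (\<Sum>j<n. z j * (D j)\<^sup>2)"
    by (simp add: G_def D_def sum.distrib sum_distrib_left power2_eq_square algebra_simps sum_subtractf)
  have e3: "(\<Sum>i<m. \<beta>' i * b i) = (\<Sum>i<m. \<beta> i * b i) + (\<Sum>i<m. b i * (\<beta>' i - \<beta> i))"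
    by (simp add: sum.distrib algebra_simps sum_subtractf)
  have sw: "(\<Sum>i<k. sqrt (lam i) * (\<Sum>j<n. v i j * z j * gm \<alpha> \<beta> j) * (\<alpha>' i - \<alpha> i))
   + (\<Sum>i<m. (\<Sum>j<n. A i j * z j * gm \<alpha> \<beta> j) * (\<beta>' i - \<beta> i)) = (\<Sum>j<n. z j * G j * D j)"
    using swap_lemma unfolding G_def D_def .
  have ipe: "ip (gA z \<alpha> \<beta>) (gB z \<alpha> \<beta>) (\<lambda>i. \<alpha>' i - \<alpha> i) (\<lambda>i. \<beta>' i - \<beta> i)
     = - (\<Sum>i<k. \<alpha> i * (\<alpha>' i - \<alpha> i)) / 2 - (\<Sum>i<m. b i * (\<beta>' i - \<beta> i))
       - \<eta> / 2 * ((\<Sum>i<k. sqrt (lam i) * (\<Sum>j<n. v i j * z j * gm \<alpha> \<beta> j) * (\<alpha>' i - \<alpha> i))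
   + (\<Sum>i<m. (\<Sum>j<n. A i j * z j * gm \<alpha> \<beta> j) * (\<beta>' i - \<beta> i)))"
  proof -
    have a: "(\<Sum>i<k. gA z \<alpha> \<beta> i * (\<alpha>' i - \<alpha> i)) = (\<Sum>i<k. (-1/2) * (\<alpha> i * (\<alpha>' i - \<alpha> i))
        + (-\<eta>/2) * (sqrt (lam i) * (\<Sum>j<n. v i j * z j * gm \<alpha> \<beta> j) * (\<alpha>' i - \<alpha> i)))"
      by (rule sum.cong) (auto simp: gA_def field_simps)
    have b: "(\<Sum>i<m. gB z \<alpha> \<beta> i * (\<beta>' i - \<beta> i)) = (\<Sum>i<m. (-1) * (b i * (\<beta>' i - \<beta> i))
        + (-\<eta>/2) * ((\<Sum>j<n. A i j * z j * gm \<alpha> \<beta> j) * (\<beta>' i - \<beta> i)))"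
      by (rule sum.cong) (auto simp: gB_def field_simps)
    show ?thesis unfolding ip_def a b
      by (simp only: sum.distrib sum_distrib_left[symmetric]) (simp add: algebra_simps)
  qed
  show ?thesis
    unfolding Lfun_def Qf_def ipe sw e1 e2 e3 by (simp add: G_def D_def algebra_simps)
qed

lemma Zs_val: "z \<in> Zs n s \<Longrightarrow> z j = 0 \<or> z j = 1"
  unfolding Zs_def by auto

lemma Zs_sq: "z \<in> Zs n s \<Longrightarrow> (z j)\<^sup>2 = z j"
  using Zs_val[of z j] by auto

lemma Zs_nonneg: "z \<in> Zs n s \<Longrightarrow> 0 \<le> z j"
  using Zs_val[of z j] by auto

lemma Zs_le1: "z \<in> Zs n s \<Longrightarrow> z j \<le> 1"
  using Zs_val[of z j] by auto

lemma Qf_nonneg: assumes "z \<in> Zs n s" shows "0 \<le> Qf z \<alpha> \<beta> \<alpha>' \<beta>'"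
  unfolding Qf_def using eta_pos Zs_nonneg[OF assms]
  by (intro add_nonneg_nonneg divide_nonneg_nonneg mult_nonneg_nonneg sum_nonneg) auto

lemma Qf_sym: "Qf z \<alpha> \<beta> \<alpha>' \<beta>' = Qf z \<alpha>' \<beta>' \<alpha> \<beta>"
  unfolding Qf_def by (simp add: power2_commute)

definition "Cm = (\<Sum>i<k. \<Sum>j<n. (v i j * sqrt (lam i))\<^sup>2) + (\<Sum>i<m. \<Sum>j<n. (A i j)\<^sup>2)"
definition "Kc = 2 + 2 * \<eta> * Cm"

lemma Cm_nonneg: "0 \<le> Cm"
  unfolding Cm_def by (auto intro!: add_nonneg_nonneg sum_nonneg)

lemma Kc_pos: "0 < Kc"
  unfolding Kc_def using Cm_nonneg eta_pos by (simp add: add_pos_nonneg)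

lemma sq_sum_le: "(p + q)\<^sup>2 \<le> 2 * p\<^sup>2 + 2 * (q::real)\<^sup>2"
  by (smt (verit) zero_le_power2 power2_diff power2_sum)

lemma nrm2_nonneg: "0 \<le> nrm2 a p"
  unfolding nrm2_def by (auto intro!: add_nonneg_nonneg sum_nonneg)

lemma nrm2_add: "nrm2 (\<lambda>i. a i + a' i) (\<lambda>i. p i + p' i) \<le> 2 * nrm2 a p + 2 * nrm2 a' p'"
proof -
  have "(\<Sum>i<k. (a i + a' i)\<^sup>2) \<le> (\<Sum>i<k. 2 * (a i)\<^sup>2 + 2 * (a' i)\<^sup>2)"
    by (rule sum_mono) (rule sq_sum_le)
  moreover have "(\<Sum>i<m. (p i + p' i)\<^sup>2) \<le> (\<Sum>i<m. 2 * (p i)\<^sup>2 + 2 * (p' i)\<^sup>2)"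
    by (rule sum_mono) (rule sq_sum_le)
  ultimately show ?thesis unfolding nrm2_def by (simp add: sum.distrib sum_distrib_left algebra_simps)
qed

lemma cs_z:
  assumes z: "z \<in> Zs n s"
  shows "(\<Sum>j<n. a j * z j * d j)\<^sup>2 \<le> (\<Sum>j<n. (a j)\<^sup>2) * (\<Sum>j<n. z j * (d j)\<^sup>2)"
proof -
  have "(\<Sum>j<n. a j * z j * d j)\<^sup>2 = (\<Sum>j<n. a j * (z j * d j))\<^sup>2" by (simp add: mult_ac)
  also have "\<dots> \<le> (\<Sum>j<n. (a j)\<^sup>2) * (\<Sum>j<n. (z j * d j)\<^sup>2)" by (rule Cauchy_Schwarz_ineq_sum)
  also have "(\<Sum>j<n. (z j * d j)\<^sup>2) = (\<Sum>j<n. z j * (d j)\<^sup>2)"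
    by (rule sum.cong) (simp_all add: power_mult_distrib Zs_sq[OF z])
  finally show ?thesis .
qed

lemma grad_diff:
  assumes z: "z \<in> Zs n s"
  shows "nrm2 (\<lambda>i. gA z \<alpha>' \<beta>' i - gA z \<alpha> \<beta> i) (\<lambda>i. gB z \<alpha>' \<beta>' i - gB z \<alpha> \<beta> i)
         \<le> Kc * Qf z \<alpha> \<beta> \<alpha>' \<beta>'"
proof -
  define D where "D j = gm \<alpha>' \<beta>' j - gm \<alpha> \<beta> j" for j
  define W where "W = (\<Sum>j<n. z j * (D j)\<^sup>2)"
  have W0: "0 \<le> W" unfolding W_def by (auto intro!: sum_nonneg mult_nonneg_nonneg Zs_nonneg[OF z])
  have ga: "gA z \<alpha>' \<beta>' i - gA z \<alpha> \<beta> i = - (\<alpha>' i - \<alpha> i) / 2 + (- \<eta> / 2) * (\<Sum>j<n. (v i j * sqrt (lam i)) * z j * D j)" for i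
  proof -
    have h: "(\<Sum>j<n. (v i j * sqrt (lam i)) * z j * D j) = sqrt (lam i) * (\<Sum>j<n. v i j * z j * gm \<alpha>' \<beta>' j) - sqrt (lam i) * (\<Sum>j<n. v i j * z j * gm \<alpha> \<beta> j)"
      by (simp add: D_def sum_distrib_left sum_subtractf[symmetric] algebra_simps)
    show ?thesis unfolding h gA_def by (simp add: field_simps)
  qed
  have gb: "gB z \<alpha>' \<beta>' i - gB z \<alpha> \<beta> i = (- \<eta> / 2) * (\<Sum>j<n. A i j * z j * D j)" for i
  proof -
    have h: "(\<Sum>j<n. A i j * z j * D j) = (\<Sum>j<n. A i j * z j * gm \<alpha>' \<beta>' j) - (\<Sum>j<n. A i j * z j * gm \<alpha> \<beta> j)"
      by (simp add: D_def sum_subtractf[symmetric] algebra_simps)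
    show ?thesis unfolding h gB_def by (simp add: field_simps)
  qed
  have 1: "(\<Sum>i<k. (gA z \<alpha>' \<beta>' i - gA z \<alpha> \<beta> i)\<^sup>2) \<le>
       (\<Sum>i<k. 2 * ((\<alpha>' i - \<alpha> i)\<^sup>2 / 4) + 2 * (\<eta>\<^sup>2 / 4) * ((\<Sum>j<n. (v i j * sqrt (lam i))\<^sup>2) * W))"
  proof (rule sum_mono)
    fix i
    have "(gA z \<alpha>' \<beta>' i - gA z \<alpha> \<beta> i)\<^sup>2 \<le> 2 * (- (\<alpha>' i - \<alpha> i) / 2)\<^sup>2 + 2 * ((- \<eta> / 2) * (\<Sum>j<n. (v i j * sqrt (lam i)) * z j * D j))\<^sup>2"
      unfolding ga by (rule sq_sum_le)
    also have "\<dots> = 2 * ((\<alpha>' i - \<alpha> i)\<^sup>2 / 4) + 2 * (\<eta>\<^sup>2 / 4) * (\<Sum>j<n. (v i j * sqrt (lam i)) * z j * D j)\<^sup>2"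
      by (simp add: power_mult_distrib power_divide power2_commute)
    also have "\<dots> \<le> 2 * ((\<alpha>' i - \<alpha> i)\<^sup>2 / 4) + 2 * (\<eta>\<^sup>2 / 4) * ((\<Sum>j<n. (v i j * sqrt (lam i))\<^sup>2) * W)"
      unfolding W_def by (intro add_left_mono mult_left_mono cs_z[OF z]) auto
    finally show "(gA z \<alpha>' \<beta>' i - gA z \<alpha> \<beta> i)\<^sup>2 \<le> \<dots>" .
  qed
  have 2: "(\<Sum>i<m. (gB z \<alpha>' \<beta>' i - gB z \<alpha> \<beta> i)\<^sup>2) \<le>
       (\<Sum>i<m. 2 * (\<eta>\<^sup>2 / 4) * ((\<Sum>j<n. (A i j)\<^sup>2) * W))"
  proof (rule sum_mono)
    fix i
    have "(gB z \<alpha>' \<beta>' i - gB z \<alpha> \<beta> i)\<^sup>2 = (\<eta>\<^sup>2 / 4) * (\<Sum>j<n. A i j * z j * D j)\<^sup>2"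
      unfolding gb by (simp add: power_mult_distrib power_divide)
    also have "\<dots> \<le> (\<eta>\<^sup>2 / 4) * ((\<Sum>j<n. (A i j)\<^sup>2) * W)"
      unfolding W_def by (intro mult_left_mono cs_z[OF z]) auto
    also have "\<dots> \<le> 2 * (\<eta>\<^sup>2 / 4) * ((\<Sum>j<n. (A i j)\<^sup>2) * W)"
      using W0 by (simp add: mult_nonneg_nonneg sum_nonneg)
    finally show "(gB z \<alpha>' \<beta>' i - gB z \<alpha> \<beta> i)\<^sup>2 \<le> \<dots>" .
  qed
  have "nrm2 (\<lambda>i. gA z \<alpha>' \<beta>' i - gA z \<alpha> \<beta> i) (\<lambda>i. gB z \<alpha>' \<beta>' i - gB z \<alpha> \<beta> i)
     \<le> 2 * ((\<Sum>i<k. (\<alpha>' i - \<alpha> i)\<^sup>2) / 4) + 2 * (\<eta>\<^sup>2 / 4) * Cm * W"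
    using add_mono[OF 1 2] unfolding nrm2_def Cm_def
    by (simp add: sum.distrib sum_distrib_left sum_distrib_right sum_divide_distrib algebra_simps)
  also have "\<dots> \<le> Kc * Qf z \<alpha> \<beta> \<alpha>' \<beta>'"
  proof -
    have a0: "0 \<le> (\<Sum>i<k. (\<alpha>' i - \<alpha> i)\<^sup>2) / 4" by (auto intro!: sum_nonneg)
    have "Kc * Qf z \<alpha> \<beta> \<alpha>' \<beta>' = (2 + 2 * \<eta> * Cm) * ((\<Sum>i<k. (\<alpha>' i - \<alpha> i)\<^sup>2) / 4) + (2 + 2 * \<eta> * Cm) * (\<eta> / 4 * W)"
      unfolding Kc_def Qf_def W_def D_def by (simp add: algebra_simps)
    moreover have "2 * ((\<Sum>i<k. (\<alpha>' i - \<alpha> i)\<^sup>2) / 4) \<le> (2 + 2 * \<eta> * Cm) * ((\<Sum>i<k. (\<alpha>' i - \<alpha> i)\<^sup>2) / 4)"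
      using a0 eta_pos Cm_nonneg by (intro mult_right_mono) auto
    moreover have "2 * (\<eta>\<^sup>2 / 4) * Cm * W \<le> (2 + 2 * \<eta> * Cm) * (\<eta> / 4 * W)"
    proof -
      have "2 * (\<eta>\<^sup>2 / 4) * Cm * W = (2 * \<eta> * Cm) * (\<eta> / 4 * W)" by (simp add: power2_eq_square algebra_simps)
      also have "\<dots> \<le> (2 + 2 * \<eta> * Cm) * (\<eta> / 4 * W)"
        using W0 eta_pos by (intro mult_right_mono) auto
      finally show ?thesis .
    qed
    ultimately show ?thesis by linarith
  qed
  finally show ?thesis .
qed

lemma proj_le: "0 \<le> (y::real) \<Longrightarrow> (max 0 w - y)\<^sup>2 \<le> (w - y)\<^sup>2"
  by (auto simp: max_def abs_le_square_iff[symmetric])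

lemma nrm2_expand:
  "nrm2 (\<lambda>i. a i + \<kappa> * g i) (\<lambda>i. p i + \<kappa> * h i) = nrm2 a p + 2 * \<kappa> * ip g h a p + \<kappa>\<^sup>2 * nrm2 g h"
proof -
  have e: "\<And>x y. (x + \<kappa> * y)\<^sup>2 = x\<^sup>2 + 2 * \<kappa> * (y * x) + \<kappa>\<^sup>2 * y\<^sup>2"
    by (simp add: power2_eq_square algebra_simps)
  show ?thesis unfolding nrm2_def ip_def e
    by (simp only: sum.distrib sum_distrib_left[symmetric]) (simp add: algebra_simps)
qed

lemma ip_neg: "ip g h (\<lambda>i. a i - a' i) (\<lambda>i. p i - p' i) = - ip g h (\<lambda>i. a' i - a i) (\<lambda>i. p' i - p i)"
  unfolding ip_def by (simp add: sum_negf[symmetric] algebra_simps)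

lemma one_step:
  assumes z: "z \<in> Zs n s" and kp: "0 < \<kappa>" "\<kappa> * Kc \<le> 1"
   and a': "\<forall>i<k. \<alpha>' i = \<alpha> i + \<kappa> * gA z \<alpha> \<beta> i"
   and b': "\<forall>i<m. \<beta>' i = max 0 (\<beta> i + \<kappa> * gB z \<alpha> \<beta> i)"
   and y: "\<forall>i<m. 0 \<le> yb i"
  shows "nrm2 (\<lambda>i. \<alpha>' i - ya i) (\<lambda>i. \<beta>' i - yb i) \<le> nrm2 (\<lambda>i. \<alpha> i - ya i) (\<lambda>i. \<beta> i - yb i)
     - 2 * \<kappa> * (L z ya yb - L z \<alpha> \<beta>) + 2 * \<kappa>\<^sup>2 * nrm2 (gA z ya yb) (gB z ya yb)"
proof -
  define g where "g = gA z \<alpha> \<beta>"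
  define h where "h = gB z \<alpha> \<beta>"
  define Q where "Q = Qf z \<alpha> \<beta> ya yb"
  define N where "N = nrm2 (\<lambda>i. \<alpha> i - ya i) (\<lambda>i. \<beta> i - yb i)"
  have s1: "nrm2 (\<lambda>i. \<alpha>' i - ya i) (\<lambda>i. \<beta>' i - yb i) \<le>
      nrm2 (\<lambda>i. (\<alpha> i - ya i) + \<kappa> * g i) (\<lambda>i. (\<beta> i - yb i) + \<kappa> * h i)"
    unfolding nrm2_def
  proof (rule add_mono)
    show "(\<Sum>i<k. (\<alpha>' i - ya i)\<^sup>2) \<le> (\<Sum>i<k. (\<alpha> i - ya i + \<kappa> * g i)\<^sup>2)"
      by (rule sum_mono) (simp add: a' g_def algebra_simps)
    show "(\<Sum>i<m. (\<beta>' i - yb i)\<^sup>2) \<le> (\<Sum>i<m. (\<beta> i - yb i + \<kappa> * h i)\<^sup>2)"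
    proof (rule sum_mono)
      fix i assume "i \<in> {..<m}"
      then have "(\<beta>' i - yb i)\<^sup>2 \<le> (\<beta> i + \<kappa> * h i - yb i)\<^sup>2" using b' y proj_le h_def by auto
      then show "(\<beta>' i - yb i)\<^sup>2 \<le> (\<beta> i - yb i + \<kappa> * h i)\<^sup>2" by (simp add: algebra_simps)
    qed
  qed
  have s2: "nrm2 (\<lambda>i. (\<alpha> i - ya i) + \<kappa> * g i) (\<lambda>i. (\<beta> i - yb i) + \<kappa> * h i)
      = N + 2 * \<kappa> * ip g h (\<lambda>i. \<alpha> i - ya i) (\<lambda>i. \<beta> i - yb i) + \<kappa>\<^sup>2 * nrm2 g h"
    unfolding N_def using nrm2_expand[of "\<lambda>i. \<alpha> i - ya i" \<kappa> g "\<lambda>i. \<beta> i - yb i" h] by simp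
  have s3: "ip g h (\<lambda>i. \<alpha> i - ya i) (\<lambda>i. \<beta> i - yb i) = L z \<alpha> \<beta> - L z ya yb - Q"
    using QI[of z ya yb \<alpha> \<beta>] ip_neg[of g h \<alpha> ya \<beta> yb] unfolding g_def h_def Q_def by linarith
  have s4: "nrm2 g h \<le> 2 * Kc * Q + 2 * nrm2 (gA z ya yb) (gB z ya yb)"
  proof -
    have "nrm2 g h = nrm2 (\<lambda>i. (g i - gA z ya yb i) + gA z ya yb i) (\<lambda>i. (h i - gB z ya yb i) + gB z ya yb i)"
      by simp
    also have "\<dots> \<le> 2 * nrm2 (\<lambda>i. g i - gA z ya yb i) (\<lambda>i. h i - gB z ya yb i) + 2 * nrm2 (gA z ya yb) (gB z ya yb)"
      by (rule nrm2_add)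
    also have "nrm2 (\<lambda>i. g i - gA z ya yb i) (\<lambda>i. h i - gB z ya yb i) \<le> Kc * Q"
      using grad_diff[OF z, of \<alpha> \<beta> ya yb] unfolding g_def h_def Q_def Qf_sym[of z ya yb] .
    finally show ?thesis by simp
  qed
  have Q0: "0 \<le> Q" unfolding Q_def by (rule Qf_nonneg[OF z])
  have "\<kappa>\<^sup>2 * nrm2 g h \<le> \<kappa>\<^sup>2 * (2 * Kc * Q + 2 * nrm2 (gA z ya yb) (gB z ya yb))"
    using s4 by (intro mult_left_mono) auto
  moreover have "\<kappa>\<^sup>2 * (2 * Kc * Q) \<le> 2 * \<kappa> * Q"
  proof -
    have "\<kappa>\<^sup>2 * (2 * Kc * Q) = (2 * \<kappa> * Q) * (\<kappa> * Kc)" by (simp add: power2_eq_square algebra_simps)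
    also have "\<dots> \<le> (2 * \<kappa> * Q) * 1" using kp Q0 by (intro mult_left_mono) auto
    finally show ?thesis by simp
  qed
  moreover have "2 * \<kappa> * ip g h (\<lambda>i. \<alpha> i - ya i) (\<lambda>i. \<beta> i - yb i) = 2 * \<kappa> * (L z \<alpha> \<beta> - L z ya yb) - 2 * \<kappa> * Q"
    unfolding s3 by (simp add: algebra_simps)
  moreover have "\<kappa>\<^sup>2 * (2 * Kc * Q + 2 * nrm2 (gA z ya yb) (gB z ya yb)) = \<kappa>\<^sup>2 * (2 * Kc * Q) + 2 * \<kappa>\<^sup>2 * nrm2 (gA z ya yb) (gB z ya yb)"
    by (simp add: algebra_simps)
  moreover have "2 * \<kappa> * (L z ya yb - L z \<alpha> \<beta>) = - (2 * \<kappa> * (L z \<alpha> \<beta> - L z ya yb))"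
    by (simp add: algebra_simps)
  ultimately show ?thesis using s1 s2 unfolding N_def by linarith
qed

definition "ell \<beta> = (\<Sum>i<m. \<beta> i * b i)"

lemma shift_gam: assumes "\<forall>j<n. (\<Sum>i<m. A i j * d i) = 0" "j < n"
  shows "gm \<alpha> (\<lambda>i. \<beta> i + d i) j = gm \<alpha> \<beta> j"
  using assms unfolding gam_def by (simp add: distrib_left sum.distrib)

lemma shift_L: assumes "\<forall>j<n. (\<Sum>i<m. A i j * d i) = 0"
  shows "L z \<alpha> (\<lambda>i. \<beta> i + d i) = L z \<alpha> \<beta> - ell d"
proof -
  have "(\<Sum>j<n. z j * (gm \<alpha> (\<lambda>i. \<beta> i + d i) j)\<^sup>2) = (\<Sum>j<n. z j * (gm \<alpha> \<beta> j)\<^sup>2)"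
    by (rule sum.cong) (simp_all add: shift_gam[OF assms])
  moreover have "(\<Sum>i<m. (\<beta> i + d i) * b i) = (\<Sum>i<m. \<beta> i * b i) + ell d"
    unfolding ell_def by (simp add: distrib_right sum.distrib)
  ultimately show ?thesis unfolding Lfun_def by simp
qed

lemma shift_F: assumes "\<forall>j<n. (\<Sum>i<m. A i j * d i) = 0"
  shows "F \<alpha> (\<lambda>i. \<beta> i + d i) = F \<alpha> \<beta> - ell d"
proof -
  obtain z1 where z1: "z1 \<in> Zs n s" "F \<alpha> (\<lambda>i. \<beta> i + d i) = L z1 \<alpha> (\<lambda>i. \<beta> i + d i)"
    using F_att by blast
  obtain z0 where z0: "z0 \<in> Zs n s" "F \<alpha> \<beta> = L z0 \<alpha> \<beta>" using F_att by blast
  have "F \<alpha> \<beta> \<le> L z1 \<alpha> \<beta>" by (rule F_le[OF z1(1)])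
  moreover have "F \<alpha> (\<lambda>i. \<beta> i + d i) \<le> L z0 \<alpha> (\<lambda>i. \<beta> i + d i)" by (rule F_le[OF z0(1)])
  ultimately show ?thesis using z1(2) z0(2) shift_L[OF assms, of z1 \<alpha> \<beta>] shift_L[OF assms, of z0 \<alpha> \<beta>]
    by linarith
qed

lemma shift_gA: assumes "\<forall>j<n. (\<Sum>i<m. A i j * d i) = 0"
  shows "gA z \<alpha> (\<lambda>i. \<beta> i + d i) = gA z \<alpha> \<beta>" "gB z \<alpha> (\<lambda>i. \<beta> i + d i) = gB z \<alpha> \<beta>"
proof -
  have h: "\<And>w. (\<Sum>j<n. w j * gm \<alpha> (\<lambda>i. \<beta> i + d i) j) = (\<Sum>j<n. w j * gm \<alpha> \<beta> j)"
    by (rule sum.cong) (simp_all add: shift_gam[OF assms])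
  show "gA z \<alpha> (\<lambda>i. \<beta> i + d i) = gA z \<alpha> \<beta>"
    using h[of "\<lambda>j. v _ j * z j"] unfolding gA_def by (intro ext) simp
  show "gB z \<alpha> (\<lambda>i. \<beta> i + d i) = gB z \<alpha> \<beta>"
    using h[of "\<lambda>j. A _ j * z j"] unfolding gB_def by (intro ext) simp
qed

lemma F_bound_j: assumes "j < n"
  shows "F \<alpha> \<beta> \<le> - ell \<beta> - (\<Sum>i<k. (\<alpha> i)\<^sup>2) / 4 - \<eta> / 4 * (gm \<alpha> \<beta> j)\<^sup>2"
proof -
  have z: "indicator {j} \<in> Zs n s" using assms s_pos by (intro ind_Zs) auto
  have "(\<Sum>l<n. indicator {j} l * (gm \<alpha> \<beta> l)\<^sup>2) = (gm \<alpha> \<beta> j)\<^sup>2"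
    using assms by (simp add: indicator_def sum.If_cases)
  with F_le[OF z, of \<alpha> \<beta>] show ?thesis unfolding Lfun_def ell_def by simp
qed

lemma F_bound0: "F \<alpha> \<beta> \<le> - ell \<beta> - (\<Sum>i<k. (\<alpha> i)\<^sup>2) / 4"
  using F_le[OF zero_Zs, of \<alpha> \<beta>] unfolding Lfun_def ell_def by simp

lemma sq_to0:
  fixes x e :: "nat \<Rightarrow> real"
  assumes "\<forall>j. (x j)\<^sup>2 \<le> e j" "e \<longlonglongrightarrow> 0"
  shows "x \<longlonglongrightarrow> 0"
proof -
  have "(\<lambda>j. (x j)\<^sup>2) \<longlonglongrightarrow> 0"
    by (rule tendsto_sandwich[of "\<lambda>_. 0" _ _ e]) (use assms in auto)
  then have "(\<lambda>j. sqrt ((x j)\<^sup>2)) \<longlonglongrightarrow> sqrt 0" by (rule tendsto_real_sqrt)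
  then have "(\<lambda>j. \<bar>x j\<bar>) \<longlonglongrightarrow> 0" by simp
  then show ?thesis by (rule tendsto_rabs_zero_cancel)
qed

end

locale prob2 = prob +
  fixes as bs :: "nat \<Rightarrow> real"
  assumes bs_feas: "\<forall>i<m. 0 \<le> bs i"
    and opt: "\<forall>\<alpha> \<beta>. (\<forall>i<m. 0 \<le> \<beta> i) \<longrightarrow> F \<alpha> \<beta> \<le> F as bs"
begin

definition "fs = F as bs"

definition "Np d \<longleftrightarrow> (\<forall>i<m. 0 \<le> d i) \<and> (\<forall>j<n. (\<Sum>i<m. A i j * d i) = 0) \<and> ell d = 0"

definition "Good U S R \<alpha> \<beta> \<longleftrightarrow> ((\<forall>i<m. 0 \<le> \<beta> i) \<and> (\<forall>i<m. i \<notin> S \<longrightarrow> \<beta> i = 0) \<and> fs - U \<le> F \<alpha> \<beta>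
    \<longrightarrow> (\<exists>d. Np d \<and> (\<forall>i<m. d i \<le> \<beta> i) \<and> nrm2 \<alpha> (\<lambda>i. \<beta> i - d i) \<le> R))"

lemma ell_bound: assumes "\<forall>i<m. \<bar>\<beta> i\<bar> \<le> \<rho>" shows "\<bar>ell \<beta>\<bar> \<le> (\<Sum>i<m. \<bar>b i\<bar>) * \<rho>"
proof -
  have "\<bar>ell \<beta>\<bar> \<le> (\<Sum>i<m. \<bar>\<beta> i * b i\<bar>)" unfolding ell_def by (rule sum_abs)
  also have "\<dots> \<le> (\<Sum>i<m. \<bar>b i\<bar> * \<rho>)"
    by (rule sum_mono) (use assms in \<open>auto simp: abs_mult mult.commute intro: mult_right_mono\<close>)
  finally show ?thesis by (simp add: sum_distrib_right)
qed

lemma coord_le_nrm2: 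
  shows "i < k \<Longrightarrow> (\<alpha> i)\<^sup>2 \<le> nrm2 \<alpha> \<beta>" and "i < m \<Longrightarrow> (\<beta> i)\<^sup>2 \<le> nrm2 \<alpha> \<beta>"
proof -
  have a: "0 \<le> (\<Sum>i<k. (\<alpha> i)\<^sup>2)" "0 \<le> (\<Sum>i<m. (\<beta> i)\<^sup>2)" by (auto intro: sum_nonneg)
  show "i < k \<Longrightarrow> (\<alpha> i)\<^sup>2 \<le> nrm2 \<alpha> \<beta>"
    using member_le_sum[of i "{..<k}" "\<lambda>i. (\<alpha> i)\<^sup>2"] a unfolding nrm2_def by auto
  show "i < m \<Longrightarrow> (\<beta> i)\<^sup>2 \<le> nrm2 \<alpha> \<beta>"
    using member_le_sum[of i "{..<m}" "\<lambda>i. (\<beta> i)\<^sup>2"] a unfolding nrm2_def by auto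
qed

lemma Np_zero: "Np (\<lambda>_. 0)"
  unfolding Np_def ell_def by simp

lemma R_S:
  assumes U: "0 \<le> U"
  shows "\<forall>S. card S = N \<longrightarrow> S \<subseteq> {..<m} \<longrightarrow> (\<exists>R. \<forall>\<alpha> \<beta>. Good U S R \<alpha> \<beta>)"
proof (induction N rule: less_induct)
  case (less N)
  show ?case
  proof (intro allI impI)
    fix S :: "nat set" assume cS: "card S = N" and Sm: "S \<subseteq> {..<m}"
    have finS: "finite S" using Sm finite_subset by blast
    show "\<exists>R. \<forall>\<alpha> \<beta>. Good U S R \<alpha> \<beta>"
    proof (rule ccontr)
      assume "\<not> ?thesis"
      then have "\<forall>j::nat. \<exists>ab. \<not> Good U S ((real j)\<^sup>2) (fst ab) (snd ab)" by auto
      then obtain ab where ab: "\<forall>j. \<not> Good U S ((real j)\<^sup>2) (fst (ab j)) (snd (ab j))"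
        by (metis choice)
      define aq where "aq j = fst (ab j)" for j
      define bq where "bq j = snd (ab j)" for j
      have feas: "\<forall>i<m. 0 \<le> bq j i" and supp: "\<forall>i<m. i \<notin> S \<longrightarrow> bq j i = 0"
        and fb: "fs - U \<le> F (aq j) (bq j)"
        and nod: "\<not> (\<exists>d. Np d \<and> (\<forall>i<m. d i \<le> bq j i) \<and> nrm2 (aq j) (\<lambda>i. bq j i - d i) \<le> (real j)\<^sup>2)" for j
        using ab[rule_format, of j] unfolding Good_def aq_def bq_def by auto
      have big: "(real j)\<^sup>2 < nrm2 (aq j) (bq j)" for j
        using nod[of j] Np_zero feas[of j] by force
      define \<rho> where "\<rho> j = sqrt (nrm2 (aq j) (bq j))" for j
      have \<rho>gt: "real j < \<rho> j" for j
        unfolding \<rho>_def using big[of j] by (simp add: real_less_rsqrt)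
      have \<rho>pos: "0 < \<rho> j" for j using \<rho>gt[of j] by (smt (verit) of_nat_0_le_iff)
      have \<rho>sq: "(\<rho> j)\<^sup>2 = nrm2 (aq j) (bq j)" for j
        unfolding \<rho>_def using nrm2_nonneg by simp
      have absa: "\<bar>aq j i\<bar> \<le> \<rho> j" if "i < k" for i j
      proof -
        have "(aq j i)\<^sup>2 \<le> (\<rho> j)\<^sup>2" using coord_le_nrm2(1)[OF that] \<rho>sq by simp
        then show ?thesis using \<rho>pos[of j] by (simp add: abs_le_square_iff[symmetric])
      qed
      have absb: "\<bar>bq j i\<bar> \<le> \<rho> j" if "i < m" for i j
      proof -
        have "(bq j i)\<^sup>2 \<le> (\<rho> j)\<^sup>2" using coord_le_nrm2(2)[OF that] \<rho>sq by simp
        then show ?thesis using \<rho>pos[of j] by (simp add: abs_le_square_iff[symmetric])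
      qed
      define na where "na j i = aq j i / \<rho> j" for j i
      define nb where "nb j i = bq j i / \<rho> j" for j i
      have "\<forall>j. \<forall>i<k. \<bar>na j i\<bar> \<le> 1"
        using absa \<rho>pos by (auto simp: na_def abs_divide divide_le_eq_1 less_imp_le)
      then obtain r1 la where r1: "strict_mono r1" and la: "\<forall>i<k. (\<lambda>j. na (r1 j) i) \<longlonglongrightarrow> la i"
        using bw_fin by blast
      have "\<forall>j. \<forall>i<m. \<bar>nb (r1 j) i\<bar> \<le> 1"
        using absb \<rho>pos by (auto simp: nb_def abs_divide divide_le_eq_1 less_imp_le)
      then obtain r2 dl where r2: "strict_mono r2" and dl: "\<forall>i<m. (\<lambda>j. nb (r1 (r2 j)) i) \<longlonglongrightarrow> dl i"
        using bw_fin[of m "\<lambda>j. nb (r1 j)" 1] by blast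
      define r where "r = r1 \<circ> r2"
      have r: "strict_mono r" unfolding r_def using r1 r2 by (rule strict_mono_o)
      have ca: "(\<lambda>j. na (r j) i) \<longlonglongrightarrow> la i" if "i < k" for i
        using LIMSEQ_subseq_LIMSEQ[OF la[rule_format, OF that] r2] by (simp add: r_def o_def)
      have cb: "(\<lambda>j. nb (r j) i) \<longlonglongrightarrow> dl i" if "i < m" for i
        using dl that by (simp add: r_def o_def)
      have rj: "j \<le> r j" for j using r by (rule seq_suble)
      have top: "filterlim (\<lambda>j. \<rho> (r j)) at_top sequentially"
      proof (rule filterlim_at_top_mono[OF filterlim_real_sequentially])
        show "\<forall>\<^sub>F j in sequentially. real j \<le> \<rho> (r j)"
          using \<rho>gt rj by (auto intro!: always_eventually) (smt (verit) of_nat_mono)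
      qed
      have inv0: "(\<lambda>j. 1 / \<rho> (r j)) \<longlonglongrightarrow> 0"
        using tendsto_inverse_0_at_top[OF top] by (simp add: inverse_eq_divide)
      define Bb where "Bb = (\<Sum>i<m. \<bar>b i\<bar>)"
      define C where "C = \<bar>fs\<bar> + U"
      have Bb0: "0 \<le> Bb" unfolding Bb_def by (auto intro: sum_nonneg)
      have ellb: "\<bar>ell (bq j)\<bar> \<le> Bb * \<rho> j" for j
        unfolding Bb_def by (rule ell_bound) (use absb in auto)
      have base: "- ell (bq j) - fs + U \<le> Bb * \<rho> j + C" for j
        using ellb[of j] unfolding C_def by (smt (verit))
      have abnd: "(aq j i)\<^sup>2 \<le> 4 * (Bb * \<rho> j + C)" if "i < k" for i j
      proof -
        have "(aq j i)\<^sup>2 \<le> (\<Sum>i<k. (aq j i)\<^sup>2)"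
          using member_le_sum[of i "{..<k}" "\<lambda>i. (aq j i)\<^sup>2"] that by auto
        moreover have "(\<Sum>i<k. (aq j i)\<^sup>2) / 4 \<le> - ell (bq j) - fs + U"
          using F_bound0[of "aq j" "bq j"] fb[of j] by linarith
        ultimately have h1: "(aq j i)\<^sup>2 / 4 \<le> Bb * \<rho> j + C" using base[of j] by linarith
        have h2: "(aq j i)\<^sup>2 = 4 * ((aq j i)\<^sup>2 / 4)" by simp
        show ?thesis by (subst h2, rule mult_left_mono[OF h1]) simp
      qed
      have gbnd: "(gm (aq j) (bq j) l)\<^sup>2 \<le> 4 / \<eta> * (Bb * \<rho> j + C)" if "l < n" for l j
      proof -
        have s0: "0 \<le> (\<Sum>i<k. (aq j i)\<^sup>2) / 4" by (auto intro: sum_nonneg)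
        have "\<eta> / 4 * (gm (aq j) (bq j) l)\<^sup>2 \<le> - ell (bq j) - fs + U"
          using F_bound_j[OF that, of "aq j" "bq j"] fb[of j] s0 by linarith
        then have "\<eta> / 4 * (gm (aq j) (bq j) l)\<^sup>2 \<le> Bb * \<rho> j + C" using base[of j] by linarith
        then show ?thesis using eta_pos by (simp add: field_simps)
      qed
      have e0: "(\<lambda>j. D * (Bb * (1 / \<rho> (r j)) + C * (1 / \<rho> (r j))\<^sup>2)) \<longlonglongrightarrow> 0" for D
      proof -
        have "(\<lambda>j. D * (Bb * (1 / \<rho> (r j)) + C * (1 / \<rho> (r j))\<^sup>2)) \<longlonglongrightarrow> D * (Bb * 0 + C * 0\<^sup>2)"
          by (intro tendsto_intros inv0)
        then show ?thesis by simp
      qed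
      have divsq: "(x / \<rho> j)\<^sup>2 \<le> D * (Bb * (1 / \<rho> j) + C * (1 / \<rho> j)\<^sup>2)"
        if "x\<^sup>2 \<le> D * (Bb * \<rho> j + C)" for x D j
      proof -
        have "(x / \<rho> j)\<^sup>2 = x\<^sup>2 / (\<rho> j)\<^sup>2" by (simp add: power_divide)
        also have "\<dots> \<le> D * (Bb * \<rho> j + C) / (\<rho> j)\<^sup>2"
          using that \<rho>pos[of j] by (intro divide_right_mono) auto
        also have "\<dots> = D * (Bb * (1 / \<rho> j) + C * (1 / \<rho> j)\<^sup>2)"
          using \<rho>pos[of j] by (simp add: field_simps power2_eq_square)
        finally show ?thesis .
      qed
      have la0: "la i = 0" if "i < k" for i
      proof -
        have "(\<lambda>j. na (r j) i) \<longlonglongrightarrow> 0"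
          by (rule sq_to0[OF _ e0[of 4]]) (unfold na_def, use divsq abnd that in blast)
        then show ?thesis using ca[OF that] LIMSEQ_unique by blast
      qed
      have g0: "(\<lambda>j. gm (aq (r j)) (bq (r j)) l / \<rho> (r j)) \<longlonglongrightarrow> 0" if "l < n" for l
        by (rule sq_to0[OF _ e0[of "4 / \<eta>"]]) (use divsq gbnd that in blast)
      have Adl: "(\<Sum>i<m. A i l * dl i) = 0" if "l < n" for l
      proof -
        have eq: "(\<Sum>i<m. A i l * nb j i) = gm (aq j) (bq j) l / \<rho> j - c l * (1 / \<rho> j)
              - (\<Sum>i<k. v i l * sqrt (lam i) * na j i)" for j
          unfolding gam_def na_def nb_def
          by (simp add: sum_divide_distrib[symmetric] add_divide_distrib diff_divide_distrib mult.assoc)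
        have "(\<lambda>j. (\<Sum>i<m. A i l * nb (r j) i)) \<longlonglongrightarrow> (\<Sum>i<m. A i l * dl i)"
          by (intro tendsto_sum tendsto_mult_left cb) auto
        moreover have "(\<lambda>j. (\<Sum>i<m. A i l * nb (r j) i)) \<longlonglongrightarrow> 0 - c l * 0 - (\<Sum>i<k. v i l * sqrt (lam i) * 0)"
          unfolding eq
          by (intro tendsto_diff g0[OF that] tendsto_mult_left inv0 tendsto_sum)
             (use ca la0 in auto)
        ultimately show ?thesis using LIMSEQ_unique by fastforce
      qed
      have dl0: "0 \<le> dl i" if "i < m" for i
      proof -
        have "0 \<le> nb (r j) i" for j using feas[of "r j"] \<rho>pos[of "r j"] that by (simp add: nb_def)
        then show ?thesis by (intro LIMSEQ_le_const[OF cb[OF that]]) auto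
      qed
      have dlS: "dl i = 0" if "i < m" "i \<notin> S" for i
      proof -
        have "(\<lambda>j. nb (r j) i) = (\<lambda>_. 0)" using supp that by (auto simp: nb_def)
        then show ?thesis using cb[OF that(1)] LIMSEQ_unique tendsto_const by metis
      qed
      have ell_le: "ell dl \<le> 0"
      proof -
        have c1: "(\<lambda>j. ell (nb (r j))) \<longlonglongrightarrow> ell dl"
          unfolding ell_def by (intro tendsto_sum tendsto_mult_right cb) auto
        have c2: "(\<lambda>j. (U - fs) * (1 / \<rho> (r j))) \<longlonglongrightarrow> 0"
          using tendsto_mult_left[OF inv0, of "U - fs"] by simp
        have c3: "ell (nb (r j)) \<le> (U - fs) * (1 / \<rho> (r j))" for j
        proof -
          have s0: "0 \<le> (\<Sum>i<k. (aq (r j) i)\<^sup>2) / 4" by (auto intro: sum_nonneg)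
          have h: "ell (bq (r j)) \<le> U - fs"
            using F_bound0[of "aq (r j)" "bq (r j)"] fb[of "r j"] s0 by linarith
          have e: "ell (nb (r j)) = ell (bq (r j)) * (1 / \<rho> (r j))"
            unfolding ell_def nb_def by (simp add: sum_divide_distrib)
          have "0 \<le> 1 / \<rho> (r j)" using \<rho>pos[of "r j"] by simp
          then show ?thesis unfolding e by (rule mult_right_mono[OF h])
        qed
        show ?thesis by (rule LIMSEQ_le[OF c1 c2]) (use c3 in auto)
      qed
      have ell_ge: "0 \<le> ell dl"
      proof -
        have A0: "\<forall>l<n. (\<Sum>i<m. A i l * dl i) = 0" using Adl by blast
        have e: "F as (\<lambda>i. bs i + dl i) = fs - ell dl"
          unfolding fs_def by (rule shift_F[OF A0])
        have "\<forall>i<m. 0 \<le> bs i + dl i" using bs_feas dl0 by (simp add: add_nonneg_nonneg)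
        then have "F as (\<lambda>i. bs i + dl i) \<le> fs"
          unfolding fs_def using opt[rule_format, of "\<lambda>i. bs i + dl i" as] by blast
        then show ?thesis using e by simp
      qed
      have Npdl: "Np dl" unfolding Np_def
      proof (intro conjI allI impI)
        show "0 \<le> dl i" if "i < m" for i using dl0[OF that] .
        show "(\<Sum>i<m. A i l * dl i) = 0" if "l < n" for l using Adl[OF that] .
        show "ell dl = 0" using ell_le ell_ge by linarith
      qed
      have norm1: "(\<Sum>i<m. (dl i)\<^sup>2) = 1"
      proof -
        have one: "nrm2 (na j) (nb j) = 1" for j
        proof -
          have "nrm2 (na j) (nb j) = nrm2 (aq j) (bq j) / (\<rho> j)\<^sup>2"
            unfolding nrm2_def na_def nb_def by (simp add: power_divide sum_divide_distrib add_divide_distrib)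
          moreover have "0 < nrm2 (aq j) (bq j)" using \<rho>sq[of j] \<rho>pos[of j] by (metis zero_less_power2 less_irrefl)
          ultimately show ?thesis using \<rho>sq[of j] by simp
        qed
        have "(\<lambda>j. nrm2 (na (r j)) (nb (r j))) \<longlonglongrightarrow> nrm2 la dl"
          unfolding nrm2_def by (intro tendsto_add tendsto_sum tendsto_power ca cb) auto
        then have "nrm2 la dl = 1" using one by (simp add: LIMSEQ_const_iff)
        moreover have "(\<Sum>i<k. (la i)\<^sup>2) = 0" using la0 by simp
        ultimately show ?thesis unfolding nrm2_def by simp
      qed
      define P where "P = {i. i < m \<and> 0 < dl i}"
      have finP: "finite P" unfolding P_def by simp
      have PS: "P \<subseteq> S" unfolding P_def using dlS by force
      have Pne: "P \<noteq> {}"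
      proof
        assume "P = {}"
        then have "\<forall>i<m. dl i = 0" using dl0 unfolding P_def by force
        then show False using norm1 by simp
      qed
      define t where "t j = Min ((\<lambda>i. bq (r j) i / dl i) ` P)" for j
      have t_in: "\<exists>i\<in>P. t j = bq (r j) i / dl i" for j
      proof -
        have "t j \<in> (\<lambda>i. bq (r j) i / dl i) ` P" unfolding t_def using finP Pne by (intro Min_in) auto
        then show ?thesis by auto
      qed
      have t_le: "t j \<le> bq (r j) i / dl i" if "i \<in> P" for i j
        unfolding t_def using finP that by (intro Min_le) auto
      have t0: "0 \<le> t j" for j
      proof -
        obtain i where i: "i \<in> P" "t j = bq (r j) i / dl i" using t_in by blast
        then have "i < m" "0 < dl i" unfolding P_def by auto
        then show ?thesis using i(2) feas[of "r j"] by simp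
      qed
      have "\<forall>j. \<exists>i. i \<in> P \<and> t j = bq (r j) i / dl i" using t_in by blast
      from choice[OF this] obtain ij where ij: "\<forall>j. ij j \<in> P \<and> t j = bq (r j) (ij j) / dl (ij j)"
        by blast
      have "finite (ij ` UNIV)" by (rule finite_subset[OF _ finP]) (use ij in auto)
      then obtain a0 where a0: "\<not> finite {a. ij a = ij a0}"
        using pigeonhole_infinite[of "UNIV :: nat set" ij] by auto
      define i0 where "i0 = ij a0"
      have i0P: "i0 \<in> P" unfolding i0_def using ij[rule_format, of a0] by simp
      have i0S: "i0 \<in> S" using i0P PS by (rule subsetD[rotated])
      have cS': "card (S - {i0}) < N" using card_Diff1_less[OF finS i0S] cS by simp
      have S'm: "S - {i0} \<subseteq> {..<m}" using Sm by auto
      obtain R0 where R0: "\<forall>\<alpha> \<beta>. Good U (S - {i0}) R0 \<alpha> \<beta>"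
        using less.IH[OF cS', rule_format, OF refl S'm] by (elim exE) (rule that)
      have "\<exists>j>nat \<lceil>\<bar>R0\<bar>\<rceil>. j \<in> {a. ij a = ij a0}"
        using a0 unfolding infinite_nat_iff_unbounded by (elim allE)
      then obtain j where j: "ij j = i0" "nat \<lceil>\<bar>R0\<bar>\<rceil> < j" unfolding i0_def by auto
      define jj where "jj = r j"
      have Rj: "R0 \<le> (real jj)\<^sup>2"
      proof -
        have "\<bar>R0\<bar> < real j" using j(2) by linarith
        moreover have "real j \<le> real jj" unfolding jj_def using rj by simp
        moreover have "1 \<le> real jj" using j(2) rj[of j] unfolding jj_def by linarith
        then have "real jj \<le> (real jj)\<^sup>2" by (simp add: power2_eq_square)
        ultimately show ?thesis by linarith
      qed
      have tj: "t j = bq jj i0 / dl i0" using ij[rule_format, of j] j(1) unfolding jj_def by simp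
      define \<beta>' where "\<beta>' i = bq jj i + (- t j * dl i)" for i
      have dl_nP: "dl i = 0" if "i < m" "i \<notin> P" for i using that dl0[OF that(1)] unfolding P_def by auto
      have f1: "\<forall>i<m. 0 \<le> \<beta>' i"
      proof (intro allI impI)
        fix i assume i: "i < m"
        show "0 \<le> \<beta>' i"
        proof (cases "i \<in> P")
          case True
          then have "0 < dl i" unfolding P_def by auto
          moreover have "t j \<le> bq jj i / dl i" using t_le[OF True] unfolding jj_def .
          ultimately have "t j * dl i \<le> bq jj i" by (simp add: pos_le_divide_eq)
          then show ?thesis unfolding \<beta>'_def by simp
        next
          case False
          then show ?thesis unfolding \<beta>'_def using dl_nP[OF i False] feas[of jj] i by simp
        qed
      qed
      have f2: "\<forall>i<m. i \<notin> S - {i0} \<longrightarrow> \<beta>' i = 0"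
      proof (intro allI impI)
        fix i assume i: "i < m" "i \<notin> S - {i0}"
        show "\<beta>' i = 0"
        proof (cases "i = i0")
          case True
          have "0 < dl i0" using i0P unfolding P_def by auto
          then show ?thesis unfolding \<beta>'_def True tj by simp
        next
          case False
          then have "i \<notin> S" using i by blast
          then show ?thesis unfolding \<beta>'_def using supp[of jj] dlS[of i] i by simp
        qed
      qed
      have A0: "\<forall>l<n. (\<Sum>i<m. A i l * (- t j * dl i)) = 0"
      proof (intro allI impI)
        fix l assume "l < n"
        have "(\<Sum>i<m. A i l * (- t j * dl i)) = - t j * (\<Sum>i<m. A i l * dl i)"
          by (simp add: sum_distrib_left algebra_simps)
        then show "(\<Sum>i<m. A i l * (- t j * dl i)) = 0" using Adl[OF \<open>l < n\<close>] by simp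
      qed
      have ell0: "ell dl = 0" using Npdl unfolding Np_def by blast
      have f3: "fs - U \<le> F (aq jj) \<beta>'"
      proof -
        have "F (aq jj) \<beta>' = F (aq jj) (bq jj) - ell (\<lambda>i. - t j * dl i)"
          unfolding \<beta>'_def by (rule shift_F[OF A0])
        moreover have "ell (\<lambda>i. - t j * dl i) = - t j * ell dl"
          unfolding ell_def by (simp add: sum_distrib_left algebra_simps)
        ultimately show ?thesis using fb[of jj] ell0 by simp
      qed
      obtain d' where d': "Np d'" "\<forall>i<m. d' i \<le> \<beta>' i" "nrm2 (aq jj) (\<lambda>i. \<beta>' i - d' i) \<le> R0"
        using mp[OF R0[rule_format, of "aq jj" \<beta>', unfolded Good_def] conjI[OF f1 conjI[OF f2 f3]]] by (elim exE conjE)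
      define d where "d i = t j * dl i + d' i" for i
      have H1: "Np d" unfolding Np_def
      proof (intro conjI allI impI)
        fix i assume "i < m"
        then show "0 \<le> d i" unfolding d_def using t0[of j] dl0[of i] d'(1) unfolding Np_def
          by (simp add: add_nonneg_nonneg)
      next
        fix l assume l: "l < n"
        have "(\<Sum>i<m. A i l * d i) = t j * (\<Sum>i<m. A i l * dl i) + (\<Sum>i<m. A i l * d' i)"
          unfolding d_def by (simp add: sum.distrib sum_distrib_left algebra_simps)
        then show "(\<Sum>i<m. A i l * d i) = 0" using Adl[OF l] d'(1) l unfolding Np_def by simp
      next
        have "ell d = t j * ell dl + ell d'"
          unfolding d_def ell_def by (simp add: sum.distrib sum_distrib_left algebra_simps)
        then show "ell d = 0" using ell0 d'(1) unfolding Np_def by simp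
      qed
      have H2: "\<forall>i<m. d i \<le> bq jj i" using d'(2) unfolding d_def \<beta>'_def by auto
      have H3: "nrm2 (aq jj) (\<lambda>i. bq jj i - d i) \<le> (real jj)\<^sup>2"
      proof -
        have "(\<lambda>i. bq jj i - d i) = (\<lambda>i. \<beta>' i - d' i)" unfolding d_def \<beta>'_def by (simp add: algebra_simps)
        then show ?thesis using d'(3) Rj by simp
      qed
      have "\<exists>d. Np d \<and> (\<forall>i<m. d i \<le> bq jj i) \<and> nrm2 (aq jj) (\<lambda>i. bq jj i - d i) \<le> (real jj)\<^sup>2"
        by (rule exI[of _ d]) (intro conjI H1 H2 H3)
      then show False using nod[of jj] by (rule notE[rotated])
    qed
  qed
qed

lemma Rlem: assumes "0 \<le> U"
  shows "\<exists>R. \<forall>\<alpha> \<beta>. (\<forall>i<m. 0 \<le> \<beta> i) \<and> fs - U \<le> F \<alpha> \<beta> \<longrightarrow>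
           (\<exists>d. Np d \<and> (\<forall>i<m. d i \<le> \<beta> i) \<and> nrm2 \<alpha> (\<lambda>i. \<beta> i - d i) \<le> R)"
proof -
  obtain R where R: "\<forall>\<alpha> \<beta>. Good U {..<m} R \<alpha> \<beta>"
    using R_S[OF assms, of m, rule_format, of "{..<m}"] by auto
  show ?thesis
    by (rule exI[of _ R]) (use R in \<open>auto simp: Good_def\<close>)
qed

lemma tendsto_gam:
  assumes a: "\<forall>i<k. (\<lambda>j. a j i) \<longlonglongrightarrow> a0 i" and b: "\<forall>i<m. (\<lambda>j. p j i) \<longlonglongrightarrow> p0 i"
  shows "(\<lambda>j. gm (a j) (p j) l) \<longlonglongrightarrow> gm a0 p0 l"
  unfolding gam_def by (intro tendsto_intros) (use a b in auto)

lemma tendsto_L: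
  assumes a: "\<forall>i<k. (\<lambda>j. a j i) \<longlonglongrightarrow> a0 i" and b: "\<forall>i<m. (\<lambda>j. p j i) \<longlonglongrightarrow> p0 i"
  shows "(\<lambda>j. L z (a j) (p j)) \<longlonglongrightarrow> L z a0 p0"
  unfolding Lfun_def by (intro tendsto_intros tendsto_gam[OF a b]) (use a b in auto)

lemma tendsto_grad:
  assumes a: "\<forall>i<k. (\<lambda>j. a j i) \<longlonglongrightarrow> a0 i" and b: "\<forall>i<m. (\<lambda>j. p j i) \<longlonglongrightarrow> p0 i"
  shows "(\<lambda>j. nrm2 (gA z (a j) (p j)) (gB z (a j) (p j))) \<longlonglongrightarrow> nrm2 (gA z a0 p0) (gB z a0 p0)"
  unfolding nrm2_def gA_def gB_def by (intro tendsto_intros tendsto_gam[OF a b]) (use a b in auto)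

lemma tendsto_nrm2:
  assumes a: "\<forall>i<k. (\<lambda>j. a j i) \<longlonglongrightarrow> a0 i" and b: "\<forall>i<m. (\<lambda>j. p j i) \<longlonglongrightarrow> p0 i"
  shows "(\<lambda>j. nrm2 (\<lambda>i. a j i - a0 i) (\<lambda>i. p j i - p0 i)) \<longlonglongrightarrow> 0"
proof -
  have "(\<lambda>j. nrm2 (\<lambda>i. a j i - a0 i) (\<lambda>i. p j i - p0 i)) \<longlonglongrightarrow>
     (\<Sum>i<k. (a0 i - a0 i)\<^sup>2) + (\<Sum>i<m. (p0 i - p0 i)\<^sup>2)"
    unfolding nrm2_def by (intro tendsto_intros) (use a b in auto)
  then show ?thesis by simp
qed

lemma Np_shift:
  assumes "Np d"
  shows "F \<alpha> (\<lambda>i. \<beta> i + d i) = F \<alpha> \<beta>" "F \<alpha> (\<lambda>i. \<beta> i - d i) = F \<alpha> \<beta>"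
    "gA z \<alpha> (\<lambda>i. \<beta> i - d i) = gA z \<alpha> \<beta>" "gB z \<alpha> (\<lambda>i. \<beta> i - d i) = gB z \<alpha> \<beta>"
proof -
  have A0: "\<forall>j<n. (\<Sum>i<m. A i j * d i) = 0" and e0: "ell d = 0" using assms unfolding Np_def by auto
  have A1: "\<forall>j<n. (\<Sum>i<m. A i j * (- d i)) = 0"
    using A0 by (simp add: sum_negf)
  have e1: "ell (\<lambda>i. - d i) = 0" using e0 unfolding ell_def by (simp add: sum_negf)
  show "F \<alpha> (\<lambda>i. \<beta> i + d i) = F \<alpha> \<beta>" using shift_F[OF A0] e0 by simp
  show "F \<alpha> (\<lambda>i. \<beta> i - d i) = F \<alpha> \<beta>" using shift_F[OF A1, of \<alpha> \<beta>] e1 by simp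
  show "gA z \<alpha> (\<lambda>i. \<beta> i - d i) = gA z \<alpha> \<beta>" using shift_gA(1)[OF A1, of z \<alpha> \<beta>] by simp
  show "gB z \<alpha> (\<lambda>i. \<beta> i - d i) = gB z \<alpha> \<beta>" using shift_gA(2)[OF A1, of z \<alpha> \<beta>] by simp
qed

lemma abs_le_of_sq: assumes "x\<^sup>2 \<le> R" shows "\<bar>x::real\<bar> \<le> 1 + R"
proof (cases "\<bar>x\<bar> \<le> 1")
  case True
  have "0 \<le> x\<^sup>2" by simp
  then show ?thesis using True assms by linarith
next
  case False
  then have "\<bar>x\<bar> * 1 \<le> \<bar>x\<bar> * \<bar>x\<bar>" by (intro mult_left_mono) auto
  also have "\<bar>x\<bar> * \<bar>x\<bar> = x\<^sup>2" by (simp add: power2_eq_square abs_mult[symmetric])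
  finally show ?thesis using assms by linarith
qed

definition "optp \<alpha> \<beta> \<longleftrightarrow> (\<forall>i<m. 0 \<le> \<beta> i) \<and> fs \<le> F \<alpha> \<beta>"

lemma bounded_seq_conv:
  fixes aq cq :: "nat \<Rightarrow> nat \<Rightarrow> real"
  assumes "\<forall>j. nrm2 (aq j) (cq j) \<le> R"
  shows "\<exists>r la lb. strict_mono r \<and> (\<forall>i<k. (\<lambda>j. aq (r j) i) \<longlonglongrightarrow> la i) \<and> (\<forall>i<m. (\<lambda>j. cq (r j) i) \<longlonglongrightarrow> lb i)"
proof -
  have "\<forall>j. \<forall>i<k. \<bar>aq j i\<bar> \<le> 1 + R"
    using assms coord_le_nrm2(1) abs_le_of_sq order_trans by metis
  then obtain r1 la where r1: "strict_mono r1" and la: "\<forall>i<k. (\<lambda>j. aq (r1 j) i) \<longlonglongrightarrow> la i"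
    using bw_fin by blast
  have "\<forall>j. \<forall>i<m. \<bar>cq (r1 j) i\<bar> \<le> 1 + R"
    using assms coord_le_nrm2(2) abs_le_of_sq order_trans by metis
  then obtain r2 lb where r2: "strict_mono r2" and lb: "\<forall>i<m. (\<lambda>j. cq (r1 (r2 j)) i) \<longlonglongrightarrow> lb i"
    using bw_fin[of m "\<lambda>j. cq (r1 j)"] by blast
  have "\<forall>i<k. (\<lambda>j. aq (r1 (r2 j)) i) \<longlonglongrightarrow> la i"
  proof (intro allI impI)
    fix i assume "i < k"
    then show "(\<lambda>j. aq (r1 (r2 j)) i) \<longlonglongrightarrow> la i"
      using LIMSEQ_subseq_LIMSEQ[OF la[rule_format, OF \<open>i < k\<close>] r2] by (simp add: o_def)
  qed
  then show ?thesis using r1 r2 lb by (intro exI[of _ "r1 \<circ> r2"] exI[of _ la] exI[of _ lb]) (auto intro: strict_mono_o)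
qed

lemma EB:
  assumes "0 < \<delta>"
  shows "\<exists>\<epsilon>>0. \<forall>\<alpha> \<beta>. (\<forall>i<m. 0 \<le> \<beta> i) \<and> fs - \<epsilon> < F \<alpha> \<beta> \<longrightarrow>
     (\<exists>ya yb. optp ya yb \<and> nrm2 (\<lambda>i. \<alpha> i - ya i) (\<lambda>i. \<beta> i - yb i) < \<delta>)"
proof (rule ccontr)
  assume neg: "\<not> ?thesis"
  have ex: "\<exists>ab. (\<forall>i<m. 0 \<le> snd ab i) \<and> fs - 1 / (real j + 1) < F (fst ab) (snd ab) \<and>
     \<not> (\<exists>ya yb. optp ya yb \<and> nrm2 (\<lambda>i. fst ab i - ya i) (\<lambda>i. snd ab i - yb i) < \<delta>)" for j
  proof -
    have pos: "0 < 1 / (real j + 1)" by simp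
    have h: "\<not> (\<forall>\<alpha> \<beta>. (\<forall>i<m. 0 \<le> \<beta> i) \<and> fs - 1 / (real j + 1) < F \<alpha> \<beta> \<longrightarrow>
     (\<exists>ya yb. optp ya yb \<and> nrm2 (\<lambda>i. \<alpha> i - ya i) (\<lambda>i. \<beta> i - yb i) < \<delta>))"
    proof
      assume a: "\<forall>\<alpha> \<beta>. (\<forall>i<m. 0 \<le> \<beta> i) \<and> fs - 1 / (real j + 1) < F \<alpha> \<beta> \<longrightarrow>
         (\<exists>ya yb. optp ya yb \<and> nrm2 (\<lambda>i. \<alpha> i - ya i) (\<lambda>i. \<beta> i - yb i) < \<delta>)"
      show False by (rule notE[OF neg], rule exI[of _ "1 / (real j + 1)"], rule conjI[OF pos a])
    qed
    then obtain \<alpha> \<beta> where "(\<forall>i<m. 0 \<le> \<beta> i) \<and> fs - 1 / (real j + 1) < F \<alpha> \<beta> \<and>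
       \<not> (\<exists>ya yb. optp ya yb \<and> nrm2 (\<lambda>i. \<alpha> i - ya i) (\<lambda>i. \<beta> i - yb i) < \<delta>)"
      unfolding not_all not_imp by (elim exE conjE) (rule that, (intro conjI)?, assumption+)
    then show ?thesis by (intro exI[of _ "(\<alpha>, \<beta>)"]) simp
  qed
  obtain ab where ab: "\<forall>j. (\<forall>i<m. 0 \<le> snd (ab j) i) \<and> fs - 1 / (real j + 1) < F (fst (ab j)) (snd (ab j)) \<and>
     \<not> (\<exists>ya yb. optp ya yb \<and> nrm2 (\<lambda>i. fst (ab j) i - ya i) (\<lambda>i. snd (ab j) i - yb i) < \<delta>)"
  proof -
    have "\<forall>j. \<exists>ab. (\<forall>i<m. 0 \<le> snd ab i) \<and> fs - 1 / (real j + 1) < F (fst ab) (snd ab) \<and>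
     \<not> (\<exists>ya yb. optp ya yb \<and> nrm2 (\<lambda>i. fst ab i - ya i) (\<lambda>i. snd ab i - yb i) < \<delta>)"
      by (rule allI, rule ex)
    from choice[OF this] show ?thesis using that by (elim exE)
  qed
  define aq where "aq j = fst (ab j)" for j
  define bq where "bq j = snd (ab j)" for j
  have feas: "\<forall>i<m. 0 \<le> bq j i" for j
    using spec[OF ab, of j] unfolding aq_def bq_def by (elim conjE)
  have fb: "fs - 1 / (real j + 1) < F (aq j) (bq j)" for j
    using spec[OF ab, of j] unfolding aq_def bq_def by (elim conjE)
  have noopt: "\<not> (\<exists>ya yb. optp ya yb \<and> nrm2 (\<lambda>i. aq j i - ya i) (\<lambda>i. bq j i - yb i) < \<delta>)" for j
    using spec[OF ab, of j] unfolding aq_def bq_def by (elim conjE)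
  obtain R where R: "\<forall>\<alpha> \<beta>. (\<forall>i<m. 0 \<le> \<beta> i) \<and> fs - 1 \<le> F \<alpha> \<beta> \<longrightarrow>
           (\<exists>d. Np d \<and> (\<forall>i<m. d i \<le> \<beta> i) \<and> nrm2 \<alpha> (\<lambda>i. \<beta> i - d i) \<le> R)"
    using Rlem[of 1] by auto
  have "\<exists>d. Np d \<and> (\<forall>i<m. d i \<le> bq j i) \<and> nrm2 (aq j) (\<lambda>i. bq j i - d i) \<le> R" for j
  proof -
    have "1 / (real j + 1) \<le> 1" by simp
    then have "fs - 1 \<le> F (aq j) (bq j)" using fb[of j] by linarith
    then show ?thesis using R feas[of j] by blast
  qed
  then obtain dq where dq: "\<forall>j. Np (dq j) \<and> (\<forall>i<m. dq j i \<le> bq j i) \<and> nrm2 (aq j) (\<lambda>i. bq j i - dq j i) \<le> R"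
    by (metis choice)
  define cq where "cq j i = bq j i - dq j i" for j i
  have cfeas: "\<forall>i<m. 0 \<le> cq j i" for j using dq unfolding cq_def by auto
  have cF: "F (aq j) (cq j) = F (aq j) (bq j)" for j
    unfolding cq_def[abs_def] using Np_shift(2) dq by blast
  have cno: "\<not> (optp ya yb \<and> nrm2 (\<lambda>i. aq j i - ya i) (\<lambda>i. cq j i - yb i) < \<delta>)" for j ya yb
  proof
    assume h: "optp ya yb \<and> nrm2 (\<lambda>i. aq j i - ya i) (\<lambda>i. cq j i - yb i) < \<delta>"
    have np: "Np (dq j)" using dq by blast
    have "optp ya (\<lambda>i. yb i + dq j i)"
      using h np Np_shift(1)[OF np] unfolding optp_def Np_def by (auto intro: add_nonneg_nonneg)
    moreover have "nrm2 (\<lambda>i. aq j i - ya i) (\<lambda>i. bq j i - (yb i + dq j i)) < \<delta>"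
      using h unfolding cq_def by (simp add: algebra_simps)
    ultimately show False using noopt[of j] by blast
  qed
  have "\<forall>j. nrm2 (aq j) (cq j) \<le> R" using dq unfolding cq_def[abs_def] by blast
  then obtain r la lb where r: "strict_mono r" and la: "\<forall>i<k. (\<lambda>j. aq (r j) i) \<longlonglongrightarrow> la i"
    and lb: "\<forall>i<m. (\<lambda>j. cq (r j) i) \<longlonglongrightarrow> lb i"
    using bounded_seq_conv by blast
  have lbf: "\<forall>i<m. 0 \<le> lb i"
  proof (intro allI impI)
    fix i assume i: "i < m"
    show "0 \<le> lb i" by (rule LIMSEQ_le_const[OF lb[rule_format, OF i]]) (use cfeas i in auto)
  qed
  have inv: "(\<lambda>j. fs - 1 / (real (r j) + 1)) \<longlonglongrightarrow> fs - 0"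
  proof (intro tendsto_diff tendsto_const)
    have "(\<lambda>j. inverse (real (Suc j))) \<longlonglongrightarrow> 0" by (rule LIMSEQ_inverse_real_of_nat)
    from LIMSEQ_subseq_LIMSEQ[OF this r] show "(\<lambda>j. 1 / (real (r j) + 1)) \<longlonglongrightarrow> 0"
      by (simp add: o_def inverse_eq_divide add.commute)
  qed
  have Lge: "fs \<le> L z la lb" if z: "z \<in> Zs n s" for z
  proof -
    have c1: "(\<lambda>j. L z (aq (r j)) (cq (r j))) \<longlonglongrightarrow> L z la lb" by (rule tendsto_L[OF la lb])
    have c2: "fs - 1 / (real (r j) + 1) \<le> L z (aq (r j)) (cq (r j))" for j
      using fb[of "r j"] cF[of "r j"] F_le[OF z, of "aq (r j)" "cq (r j)"] by linarith
    have "fs - 0 \<le> L z la lb" by (rule LIMSEQ_le[OF inv c1]) (use c2 in auto)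
    then show ?thesis by simp
  qed
  obtain z0 where "z0 \<in> Zs n s" "F la lb = L z0 la lb" using F_att by blast
  then have opt_l: "optp la lb" unfolding optp_def using Lge lbf by auto
  have "(\<lambda>j. nrm2 (\<lambda>i. aq (r j) i - la i) (\<lambda>i. cq (r j) i - lb i)) \<longlonglongrightarrow> 0"
    by (rule tendsto_nrm2[OF la lb])
  then have "\<forall>\<^sub>F j in sequentially. nrm2 (\<lambda>i. aq (r j) i - la i) (\<lambda>i. cq (r j) i - lb i) < \<delta>"
    using assms by (rule order_tendstoD)
  then obtain N where "\<forall>j\<ge>N. nrm2 (\<lambda>i. aq (r j) i - la i) (\<lambda>i. cq (r j) i - lb i) < \<delta>"
    unfolding eventually_sequentially by (elim exE)
  then have "nrm2 (\<lambda>i. aq (r N) i - la i) (\<lambda>i. cq (r N) i - lb i) < \<delta>" by simp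
  then show False using cno[of la lb "r N"] opt_l by simp
qed

lemma Gz: "\<exists>G. \<forall>ya yb. optp ya yb \<longrightarrow> nrm2 (gA z ya yb) (gB z ya yb) \<le> G"
proof (rule ccontr)
  assume neg: "\<not> ?thesis"
  have ex: "\<forall>j. \<exists>ab. optp (fst ab) (snd ab) \<and> real j < nrm2 (gA z (fst ab) (snd ab)) (gB z (fst ab) (snd ab))"
  proof
    fix j :: nat
    have "\<not> (\<forall>ya yb. optp ya yb \<longrightarrow> nrm2 (gA z ya yb) (gB z ya yb) \<le> real j)"
    proof
      assume "\<forall>ya yb. optp ya yb \<longrightarrow> nrm2 (gA z ya yb) (gB z ya yb) \<le> real j"
      then show False by (rule notE[OF neg, OF exI])
    qed
    then obtain ya yb where "optp ya yb" "real j < nrm2 (gA z ya yb) (gB z ya yb)"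
      unfolding not_all not_imp not_le by (elim exE conjE)
    then show "\<exists>ab. optp (fst ab) (snd ab) \<and> real j < nrm2 (gA z (fst ab) (snd ab)) (gB z (fst ab) (snd ab))"
      by (intro exI[of _ "(ya, yb)"]) simp
  qed
  obtain ab where ab: "\<forall>j. optp (fst (ab j)) (snd (ab j)) \<and> real j < nrm2 (gA z (fst (ab j)) (snd (ab j))) (gB z (fst (ab j)) (snd (ab j)))"
    using choice[OF ex] by (elim exE)
  define aq where "aq j = fst (ab j)" for j
  define bq where "bq j = snd (ab j)" for j
  have op: "optp (aq j) (bq j)" for j
    using spec[OF ab, of j] unfolding aq_def bq_def by (elim conjE)
  have big: "real j < nrm2 (gA z (aq j) (bq j)) (gB z (aq j) (bq j))" for j
    using spec[OF ab, of j] unfolding aq_def bq_def by (elim conjE)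
  obtain R where R: "\<forall>\<alpha> \<beta>. (\<forall>i<m. 0 \<le> \<beta> i) \<and> fs - 0 \<le> F \<alpha> \<beta> \<longrightarrow>
           (\<exists>d. Np d \<and> (\<forall>i<m. d i \<le> \<beta> i) \<and> nrm2 \<alpha> (\<lambda>i. \<beta> i - d i) \<le> R)"
    using Rlem[of 0] by auto
  have "\<exists>d. Np d \<and> (\<forall>i<m. d i \<le> bq j i) \<and> nrm2 (aq j) (\<lambda>i. bq j i - d i) \<le> R" for j
    using R op[of j] unfolding optp_def by simp
  then obtain dq where dq: "\<forall>j. Np (dq j) \<and> (\<forall>i<m. dq j i \<le> bq j i) \<and> nrm2 (aq j) (\<lambda>i. bq j i - dq j i) \<le> R"
    by (metis choice)
  define cq where "cq j i = bq j i - dq j i" for j i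
  have cg: "nrm2 (gA z (aq j) (cq j)) (gB z (aq j) (cq j)) = nrm2 (gA z (aq j) (bq j)) (gB z (aq j) (bq j))" for j
    unfolding cq_def[abs_def] using Np_shift(3,4) dq by metis
  have "\<forall>j. nrm2 (aq j) (cq j) \<le> R" using dq unfolding cq_def[abs_def] by blast
  then obtain r la lb where r: "strict_mono r" and la: "\<forall>i<k. (\<lambda>j. aq (r j) i) \<longlonglongrightarrow> la i"
    and lb: "\<forall>i<m. (\<lambda>j. cq (r j) i) \<longlonglongrightarrow> lb i"
    using bounded_seq_conv by blast
  have "(\<lambda>j. nrm2 (gA z (aq (r j)) (cq (r j))) (gB z (aq (r j)) (cq (r j)))) \<longlonglongrightarrow> nrm2 (gA z la lb) (gB z la lb)"
    by (rule tendsto_grad[OF la lb])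
  then have "\<forall>\<^sub>F j in sequentially. nrm2 (gA z (aq (r j)) (cq (r j))) (gB z (aq (r j)) (cq (r j))) < nrm2 (gA z la lb) (gB z la lb) + 1"
    by (rule order_tendstoD) simp
  then obtain N where N: "\<forall>j\<ge>N. nrm2 (gA z (aq (r j)) (cq (r j))) (gB z (aq (r j)) (cq (r j))) < nrm2 (gA z la lb) (gB z la lb) + 1"
    unfolding eventually_sequentially by blast
  define j where "j = max N (nat \<lceil>nrm2 (gA z la lb) (gB z la lb) + 1\<rceil>)"
  have "nrm2 (gA z (aq (r j)) (cq (r j))) (gB z (aq (r j)) (cq (r j))) < nrm2 (gA z la lb) (gB z la lb) + 1"
    using N unfolding j_def by simp
  moreover have "real (r j) < nrm2 (gA z (aq (r j)) (cq (r j))) (gB z (aq (r j)) (cq (r j)))"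
    using big[of "r j"] cg[of "r j"] by simp
  moreover have "nrm2 (gA z la lb) (gB z la lb) + 1 \<le> real (r j)"
  proof -
    have "nrm2 (gA z la lb) (gB z la lb) + 1 \<le> real j" unfolding j_def by linarith
    also have "\<dots> \<le> real (r j)" using seq_suble[OF r, of j] by simp
    finally show ?thesis .
  qed
  ultimately show False by linarith
qed

lemma Gbound: "\<exists>G. \<forall>z ya yb. z \<in> Zs n s \<and> optp ya yb \<longrightarrow> nrm2 (gA z ya yb) (gB z ya yb) \<le> G"
proof -
  obtain Gf where Gf: "\<forall>z ya yb. optp ya yb \<longrightarrow> nrm2 (gA z ya yb) (gB z ya yb) \<le> Gf z"
    using Gz by metis
  define G where "G = (\<Sum>z\<in>Zs n s. \<bar>Gf z\<bar>)"
  have "Gf z \<le> G" if "z \<in> Zs n s" for z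
  proof -
    have "Gf z \<le> \<bar>Gf z\<bar>" by simp
    also have "\<dots> \<le> G" unfolding G_def by (rule member_le_sum) (use that Zs_finite in auto)
    finally show ?thesis .
  qed
  then show ?thesis using Gf by (metis order_trans)
qed

lemma Qf_le:
  assumes z: "z \<in> Zs n s"
  shows "Qf z \<alpha> \<beta> \<alpha>' \<beta>' \<le> (1/4 + \<eta> / 2 * Cm) * nrm2 (\<lambda>i. \<alpha>' i - \<alpha> i) (\<lambda>i. \<beta>' i - \<beta> i)"
proof -
  define N where "N = nrm2 (\<lambda>i. \<alpha>' i - \<alpha> i) (\<lambda>i. \<beta>' i - \<beta> i)"
  define Ca where "Ca j = (\<Sum>i<k. (v i j * sqrt (lam i))\<^sup>2)" for j
  define Cb where "Cb j = (\<Sum>i<m. (A i j)\<^sup>2)" for j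
  have Na: "(\<Sum>i<k. (\<alpha>' i - \<alpha> i)\<^sup>2) \<le> N" and Nb: "(\<Sum>i<m. (\<beta>' i - \<beta> i)\<^sup>2) \<le> N"
    unfolding N_def nrm2_def by (auto intro!: sum_nonneg)
  have dg: "(gm \<alpha>' \<beta>' j - gm \<alpha> \<beta> j)\<^sup>2 \<le> 2 * (Ca j + Cb j) * N" for j
  proof -
    have "(gm \<alpha>' \<beta>' j - gm \<alpha> \<beta> j)\<^sup>2 \<le> 2 * (\<Sum>i<k. v i j * sqrt (lam i) * (\<alpha>' i - \<alpha> i))\<^sup>2
          + 2 * (\<Sum>i<m. A i j * (\<beta>' i - \<beta> i))\<^sup>2"
      unfolding gam_diff by (rule sq_sum_le)
    also have "\<dots> \<le> 2 * (Ca j * N) + 2 * (Cb j * N)"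
    proof (intro add_mono mult_left_mono)
      have "(\<Sum>i<k. v i j * sqrt (lam i) * (\<alpha>' i - \<alpha> i))\<^sup>2 \<le> Ca j * (\<Sum>i<k. (\<alpha>' i - \<alpha> i)\<^sup>2)"
        unfolding Ca_def by (rule Cauchy_Schwarz_ineq_sum)
      also have "\<dots> \<le> Ca j * N" using Na unfolding Ca_def by (intro mult_left_mono sum_nonneg) auto
      finally show "(\<Sum>i<k. v i j * sqrt (lam i) * (\<alpha>' i - \<alpha> i))\<^sup>2 \<le> Ca j * N" .
      have "(\<Sum>i<m. A i j * (\<beta>' i - \<beta> i))\<^sup>2 \<le> Cb j * (\<Sum>i<m. (\<beta>' i - \<beta> i)\<^sup>2)"
        unfolding Cb_def by (rule Cauchy_Schwarz_ineq_sum)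
      also have "\<dots> \<le> Cb j * N" using Nb unfolding Cb_def by (intro mult_left_mono sum_nonneg) auto
      finally show "(\<Sum>i<m. A i j * (\<beta>' i - \<beta> i))\<^sup>2 \<le> Cb j * N" .
    qed auto
    finally show ?thesis by (simp add: algebra_simps)
  qed
  have "(\<Sum>j<n. z j * (gm \<alpha>' \<beta>' j - gm \<alpha> \<beta> j)\<^sup>2) \<le> (\<Sum>j<n. 2 * (Ca j + Cb j) * N)"
  proof (rule sum_mono)
    fix j
    have "z j * (gm \<alpha>' \<beta>' j - gm \<alpha> \<beta> j)\<^sup>2 \<le> 1 * (gm \<alpha>' \<beta>' j - gm \<alpha> \<beta> j)\<^sup>2"
      using Zs_le1[OF z] by (intro mult_right_mono) auto
    then show "z j * (gm \<alpha>' \<beta>' j - gm \<alpha> \<beta> j)\<^sup>2 \<le> 2 * (Ca j + Cb j) * N" using dg[of j] by simp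
  qed
  also have "(\<Sum>j<n. 2 * (Ca j + Cb j) * N) = 2 * Cm * N"
    unfolding Cm_def Ca_def Cb_def
    by (simp add: sum_distrib_right[symmetric] sum_distrib_left[symmetric] sum.distrib
        sum.swap[of _ "{..<n}" "{..<k}"] sum.swap[of _ "{..<n}" "{..<m}"] mult_ac)
  finally have W: "(\<Sum>j<n. z j * (gm \<alpha>' \<beta>' j - gm \<alpha> \<beta> j)\<^sup>2) \<le> 2 * Cm * N" .
  have "Qf z \<alpha> \<beta> \<alpha>' \<beta>' \<le> N / 4 + \<eta> / 4 * (2 * Cm * N)"
    unfolding Qf_def using Na W eta_pos by (intro add_mono mult_left_mono divide_right_mono) auto
  also have "\<dots> = (1/4 + \<eta> / 2 * Cm) * N" by (simp add: algebra_simps)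
  finally show ?thesis unfolding N_def .
qed

lemma ip_amgm: assumes "0 < \<theta>"
  shows "ip g h a p \<le> \<theta> / 2 * nrm2 g h + 1 / (2 * \<theta>) * nrm2 a p"
proof -
  have t: "x * y \<le> \<theta> / 2 * x\<^sup>2 + 1 / (2 * \<theta>) * y\<^sup>2" for x y :: real
  proof -
    have "0 \<le> (\<theta> * x - y)\<^sup>2 / (2 * \<theta>)" using assms by simp
    also have "(\<theta> * x - y)\<^sup>2 / (2 * \<theta>) = \<theta> / 2 * x\<^sup>2 + 1 / (2 * \<theta>) * y\<^sup>2 - x * y"
      using assms by (simp add: power2_eq_square field_simps)
    finally show ?thesis by simp
  qed
  have "ip g h a p \<le> (\<Sum>i<k. \<theta> / 2 * (g i)\<^sup>2 + 1 / (2 * \<theta>) * (a i)\<^sup>2) + (\<Sum>i<m. \<theta> / 2 * (h i)\<^sup>2 + 1 / (2 * \<theta>) * (p i)\<^sup>2)"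
    unfolding ip_def by (intro add_mono sum_mono t)
  also have "\<dots> = \<theta> / 2 * nrm2 g h + 1 / (2 * \<theta>) * nrm2 a p"
    unfolding nrm2_def by (simp add: sum.distrib sum_distrib_left algebra_simps)
  finally show ?thesis .
qed

lemma nrm2_swap: "nrm2 (\<lambda>i. a i - a' i) (\<lambda>i. p i - p' i) = nrm2 (\<lambda>i. a' i - a i) (\<lambda>i. p' i - p i)"
  unfolding nrm2_def by (simp add: power2_commute)

lemma StepB:
  assumes "0 < \<epsilon>0"
  shows "\<exists>\<delta>>0. \<forall>\<alpha> \<beta> ya yb z. z \<in> Zs n s \<and> F \<alpha> \<beta> = L z \<alpha> \<beta> \<and> optp ya yb
            \<and> nrm2 (\<lambda>i. \<alpha> i - ya i) (\<lambda>i. \<beta> i - yb i) < \<delta> \<longrightarrow> fs - F \<alpha> \<beta> < \<epsilon>0"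
proof -
  obtain G where G: "\<forall>z ya yb. z \<in> Zs n s \<and> optp ya yb \<longrightarrow> nrm2 (gA z ya yb) (gB z ya yb) \<le> G"
    using Gbound by blast
  define G1 where "G1 = max 0 G"
  define K2 where "K2 = 1/4 + \<eta> / 2 * Cm"
  have G10: "0 \<le> G1" unfolding G1_def by simp
  have K20: "0 \<le> K2" unfolding K2_def using eta_pos Cm_nonneg by simp
  define \<theta> where "\<theta> = \<epsilon>0 / (4 * (G1 + 1))"
  have \<theta>0: "0 < \<theta>" unfolding \<theta>_def using assms G10 by simp
  define M where "M = \<theta> * Kc * K2 + 1 / (2 * \<theta>)"
  have M0: "0 < M" unfolding M_def using \<theta>0 Kc_pos K20 by (simp add: add_nonneg_pos)
  define \<delta> where "\<delta> = \<epsilon>0 / (4 * M)"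
  have \<delta>0: "0 < \<delta>" unfolding \<delta>_def using assms M0 by simp
  have \<theta>G: "\<theta> * G1 \<le> \<epsilon>0 / 4"
  proof -
    have "\<theta> * G1 = \<epsilon>0 / 4 * (G1 / (G1 + 1))" unfolding \<theta>_def using G10 by (simp add: field_simps)
    also have "\<dots> \<le> \<epsilon>0 / 4 * 1" using G10 assms by (intro mult_left_mono) auto
    finally show ?thesis by simp
  qed
  show ?thesis
  proof (intro exI[of _ \<delta>] conjI \<delta>0 allI impI)
    fix \<alpha> \<beta> ya yb z
    assume h: "z \<in> Zs n s \<and> F \<alpha> \<beta> = L z \<alpha> \<beta> \<and> optp ya yb \<and> nrm2 (\<lambda>i. \<alpha> i - ya i) (\<lambda>i. \<beta> i - yb i) < \<delta>"
    then have z: "z \<in> Zs n s" and fe: "F \<alpha> \<beta> = L z \<alpha> \<beta>" and op: "optp ya yb"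
      and r: "nrm2 (\<lambda>i. \<alpha> i - ya i) (\<lambda>i. \<beta> i - yb i) < \<delta>" by auto
    define r where "r = nrm2 (\<lambda>i. ya i - \<alpha> i) (\<lambda>i. yb i - \<beta> i)"
    have rd: "r < \<delta>" using r nrm2_swap unfolding r_def by metis
    have r0: "0 \<le> r" unfolding r_def by (rule nrm2_nonneg)
    define Q where "Q = Qf z \<alpha> \<beta> ya yb"
    have Q0: "0 \<le> Q" unfolding Q_def by (rule Qf_nonneg[OF z])
    have QK: "Q \<le> K2 * r" unfolding Q_def K2_def r_def by (rule Qf_le[OF z])
    have "fs \<le> F ya yb" using op unfolding optp_def by simp
    also have "\<dots> \<le> L z ya yb" by (rule F_le[OF z])
    also have "\<dots> = F \<alpha> \<beta> + ip (gA z \<alpha> \<beta>) (gB z \<alpha> \<beta>) (\<lambda>i. ya i - \<alpha> i) (\<lambda>i. yb i - \<beta> i) - Q"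
      unfolding fe Q_def by (rule QI)
    finally have u1: "fs - F \<alpha> \<beta> \<le> ip (gA z \<alpha> \<beta>) (gB z \<alpha> \<beta>) (\<lambda>i. ya i - \<alpha> i) (\<lambda>i. yb i - \<beta> i)"
      using Q0 by linarith
    have g2: "nrm2 (gA z \<alpha> \<beta>) (gB z \<alpha> \<beta>) \<le> 2 * Kc * Q + 2 * G1"
    proof -
      have "nrm2 (gA z \<alpha> \<beta>) (gB z \<alpha> \<beta>) = nrm2 (\<lambda>i. (gA z \<alpha> \<beta> i - gA z ya yb i) + gA z ya yb i) (\<lambda>i. (gB z \<alpha> \<beta> i - gB z ya yb i) + gB z ya yb i)"
        by simp
      also have "\<dots> \<le> 2 * nrm2 (\<lambda>i. gA z \<alpha> \<beta> i - gA z ya yb i) (\<lambda>i. gB z \<alpha> \<beta> i - gB z ya yb i) + 2 * nrm2 (gA z ya yb) (gB z ya yb)"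
        by (rule nrm2_add)
      also have "nrm2 (\<lambda>i. gA z \<alpha> \<beta> i - gA z ya yb i) (\<lambda>i. gB z \<alpha> \<beta> i - gB z ya yb i) \<le> Kc * Q"
        unfolding Q_def by (subst nrm2_swap) (rule grad_diff[OF z])
      also have "nrm2 (gA z ya yb) (gB z ya yb) \<le> G1" using G z op unfolding G1_def by (meson max.coboundedI2)
      finally show ?thesis by simp
    qed
    have "fs - F \<alpha> \<beta> \<le> \<theta> / 2 * nrm2 (gA z \<alpha> \<beta>) (gB z \<alpha> \<beta>) + 1 / (2 * \<theta>) * r"
      using u1 ip_amgm[OF \<theta>0] unfolding r_def by (rule order_trans)
    also have "\<dots> \<le> \<theta> / 2 * (2 * Kc * (K2 * r) + 2 * G1) + 1 / (2 * \<theta>) * r"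
    proof -
      have "2 * Kc * Q + 2 * G1 \<le> 2 * Kc * (K2 * r) + 2 * G1"
        using QK Kc_pos by (simp add: mult_left_mono)
      then show ?thesis using g2 \<theta>0 by (intro add_right_mono mult_left_mono) auto
    qed
    also have "\<dots> = M * r + \<theta> * G1" unfolding M_def by (simp add: algebra_simps)
    also have "\<dots> < \<epsilon>0"
    proof -
      have "M * r \<le> M * \<delta>" using rd M0 by (intro mult_left_mono) auto
      also have "M * \<delta> = \<epsilon>0 / 4" unfolding \<delta>_def using M0 by simp
      finally show ?thesis using \<theta>G assms by linarith
    qed
    finally show "fs - F \<alpha> \<beta> < \<epsilon>0" .
  qed
qed

end

locale iter = prob2 +
  fixes alpha beta zz :: "nat \<Rightarrow> nat \<Rightarrow> real" and \<kappa> :: "nat \<Rightarrow> real"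
  assumes feasI: "\<forall>t. \<forall>i<m. 0 \<le> beta t i"
    and zZs: "\<forall>t. zz t \<in> Zs n s"
    and zmin: "\<forall>t. F (alpha t) (beta t) = L (zz t) (alpha t) (beta t)"
    and aupd: "\<forall>t. \<forall>i<k. alpha (Suc t) i = alpha t i + \<kappa> t * gA (zz t) (alpha t) (beta t) i"
    and bupd: "\<forall>t. \<forall>i<m. beta (Suc t) i = max 0 (beta t i + \<kappa> t * gB (zz t) (alpha t) (beta t) i)"
    and kpos: "\<forall>t. 0 < \<kappa> t" and klim: "\<kappa> \<longlonglongrightarrow> 0" and kdiv: "\<not> summable \<kappa>"
begin

definition "ff t = F (alpha t) (beta t)"
definition "V t ya yb = nrm2 (\<lambda>i. alpha t i - ya i) (\<lambda>i. beta t i - yb i)"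

lemma ff_le: "ff t \<le> fs"
  unfolding ff_def fs_def using opt feasI by blast

lemma V0: "0 \<le> V t ya yb" unfolding V_def by (rule nrm2_nonneg)

lemma OSt:
  assumes "\<kappa> t * Kc \<le> 1" "\<forall>i<m. 0 \<le> yb i"
  shows "V (Suc t) ya yb \<le> V t ya yb - 2 * \<kappa> t * (L (zz t) ya yb - ff t)
            + 2 * (\<kappa> t)\<^sup>2 * nrm2 (gA (zz t) ya yb) (gB (zz t) ya yb)"
  unfolding V_def ff_def zmin[rule_format]
  by (rule one_step[OF zZs[rule_format] kpos[rule_format] assms(1)]) (use aupd bupd assms(2) in auto)

lemma ev_small: assumes "0 < cc" shows "\<exists>T. \<forall>t\<ge>T. \<kappa> t < cc"
proof -
  have "\<forall>\<^sub>F t in sequentially. \<kappa> t < cc" using order_tendstoD(2)[OF klim assms] .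
  then show ?thesis unfolding eventually_sequentially .
qed

lemma small_steps:
  assumes "0 < e" "0 \<le> G0"
  shows "\<exists>T. \<forall>t\<ge>T. \<kappa> t * Kc \<le> 1 \<and> 2 * \<kappa> t * G0 \<le> e \<and> \<kappa> t \<le> 1"
proof -
  define cc where "cc = min (min (1 / Kc) 1) (e / (2 * G0 + 1))"
  have cc0: "0 < cc" unfolding cc_def using assms Kc_pos by simp
  obtain T where T: "\<forall>t\<ge>T. \<kappa> t < cc" using ev_small[OF cc0] by blast
  show ?thesis
  proof (intro exI[of _ T] allI impI conjI)
    fix t assume t: "T \<le> t"
    have kc: "\<kappa> t < cc" using T t by blast
    have k0: "0 < \<kappa> t" using kpos by blast
    show "\<kappa> t * Kc \<le> 1"
    proof -
      have "\<kappa> t < 1 / Kc" using kc unfolding cc_def by simp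
      then show ?thesis using Kc_pos by (simp add: field_simps)
    qed
    show "\<kappa> t \<le> 1" using kc unfolding cc_def by simp
    show "2 * \<kappa> t * G0 \<le> e"
    proof -
      have "\<kappa> t < e / (2 * G0 + 1)" using kc unfolding cc_def by simp
      then have "\<kappa> t * (2 * G0 + 1) < e" using assms by (simp add: field_simps)
      moreover have "2 * \<kappa> t * G0 \<le> \<kappa> t * (2 * G0 + 1)" using k0 by (simp add: algebra_simps)
      ultimately show ?thesis by linarith
    qed
  qed
qed

lemma part2:
  assumes zs: "\<forall>t\<ge>T. zz t = zs" and yb: "\<forall>i<m. 0 \<le> yb i"
  shows "L zs ya yb \<le> fs"
proof (rule ccontr)
  assume neg: "\<not> ?thesis"
  define e where "e = L zs ya yb - fs"
  have e0: "0 < e" unfolding e_def using neg by simp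
  define G0 where "G0 = nrm2 (gA zs ya yb) (gB zs ya yb)"
  have G00: "0 \<le> G0" unfolding G0_def by (rule nrm2_nonneg)
  obtain T1 where T1: "\<forall>t\<ge>T1. \<kappa> t * Kc \<le> 1 \<and> 2 * \<kappa> t * G0 \<le> e \<and> \<kappa> t \<le> 1"
    using small_steps[OF e0 G00] by blast
  have dec: "\<forall>t\<ge>max T T1. V (Suc t) ya yb \<le> V t ya yb - \<kappa> t * e"
  proof (intro allI impI)
    fix t assume t: "max T T1 \<le> t"
    have z: "zz t = zs" using zs t by simp
    have k: "\<kappa> t * Kc \<le> 1" "2 * \<kappa> t * G0 \<le> e" using T1 t by auto
    have k0: "0 < \<kappa> t" using kpos by blast
    have a: "V (Suc t) ya yb \<le> V t ya yb - 2 * \<kappa> t * (L zs ya yb - ff t) + 2 * (\<kappa> t)\<^sup>2 * G0"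
      using OSt[OF k(1) yb, of ya] unfolding z G0_def .
    have b: "2 * \<kappa> t * e \<le> 2 * \<kappa> t * (L zs ya yb - ff t)"
      using ff_le[of t] k0 unfolding e_def by (intro mult_left_mono) auto
    have c: "2 * (\<kappa> t)\<^sup>2 * G0 \<le> \<kappa> t * e"
    proof -
      have "2 * (\<kappa> t)\<^sup>2 * G0 = \<kappa> t * (2 * \<kappa> t * G0)" by (simp add: power2_eq_square)
      also have "\<dots> \<le> \<kappa> t * e" using k(2) k0 by (intro mult_left_mono) auto
      finally show ?thesis .
    qed
    have d: "2 * \<kappa> t * e = \<kappa> t * e + \<kappa> t * e" by simp
    show "V (Suc t) ya yb \<le> V t ya yb - \<kappa> t * e" using a b c d by linarith
  qed
  show False
    by (rule descent[of "\<lambda>t. V t ya yb" "max T T1" \<kappa> e, OF _ dec e0 kpos kdiv]) (simp add: V0)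
qed

lemma part1: "(\<lambda>t. ff t) \<longlonglongrightarrow> fs"
proof (rule order_tendstoI)
  fix a assume "fs < a"
  then show "\<forall>\<^sub>F t in sequentially. ff t < a"
    using ff_le by (intro always_eventually allI) (rule le_less_trans)
next
  fix a assume a: "a < fs"
  define \<epsilon>0 where "\<epsilon>0 = fs - a"
  have e0: "0 < \<epsilon>0" unfolding \<epsilon>0_def using a by simp
  obtain \<delta> where \<delta>0: "0 < \<delta>" and \<delta>: "\<forall>\<alpha> \<beta> ya yb z. z \<in> Zs n s \<and> F \<alpha> \<beta> = L z \<alpha> \<beta> \<and> optp ya yb
            \<and> nrm2 (\<lambda>i. \<alpha> i - ya i) (\<lambda>i. \<beta> i - yb i) < \<delta> \<longrightarrow> fs - F \<alpha> \<beta> < \<epsilon>0"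
    using StepB[OF e0] by blast
  have hd: "0 < \<delta> / 2" using \<delta>0 by simp
  obtain \<epsilon>1 where \<epsilon>1: "0 < \<epsilon>1" and EBf: "\<forall>\<alpha> \<beta>. (\<forall>i<m. 0 \<le> \<beta> i) \<and> fs - \<epsilon>1 < F \<alpha> \<beta> \<longrightarrow>
     (\<exists>ya yb. optp ya yb \<and> nrm2 (\<lambda>i. \<alpha> i - ya i) (\<lambda>i. \<beta> i - yb i) < \<delta> / 2)"
    using EB[OF hd] by blast
  obtain G where G: "\<forall>z ya yb. z \<in> Zs n s \<and> optp ya yb \<longrightarrow> nrm2 (gA z ya yb) (gB z ya yb) \<le> G"
    using Gbound by blast
  define G1 where "G1 = max 0 G"
  have G10: "0 \<le> G1" unfolding G1_def by simp
  define e where "e = min \<epsilon>1 (\<delta> / 2)"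
  have e_pos: "0 < e" unfolding e_def using \<epsilon>1 hd by simp
  obtain T1 where T1: "\<forall>t\<ge>T1. \<kappa> t * Kc \<le> 1 \<and> 2 * \<kappa> t * G1 \<le> e \<and> \<kappa> t \<le> 1"
    using small_steps[OF e_pos G10] by blast
  have key: "V (Suc t) ya yb \<le> V t ya yb - 2 * \<kappa> t * (fs - ff t) + \<kappa> t * e"
    if t: "T1 \<le> t" and op: "optp ya yb" for t ya yb
  proof -
    have k: "\<kappa> t * Kc \<le> 1" "2 * \<kappa> t * G1 \<le> e" using T1 t by auto
    have k0: "0 < \<kappa> t" using kpos by blast
    have yb: "\<forall>i<m. 0 \<le> yb i" using op unfolding optp_def by simp
    have a1: "V (Suc t) ya yb \<le> V t ya yb - 2 * \<kappa> t * (L (zz t) ya yb - ff t)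
            + 2 * (\<kappa> t)\<^sup>2 * nrm2 (gA (zz t) ya yb) (gB (zz t) ya yb)"
      by (rule OSt[OF k(1) yb])
    have "fs \<le> F ya yb" using op unfolding optp_def by simp
    also have "\<dots> \<le> L (zz t) ya yb" by (rule F_le[OF zZs[rule_format]])
    finally have a2: "2 * \<kappa> t * (fs - ff t) \<le> 2 * \<kappa> t * (L (zz t) ya yb - ff t)"
      using k0 by (intro mult_left_mono) auto
    have "nrm2 (gA (zz t) ya yb) (gB (zz t) ya yb) \<le> G1"
      using G zZs op unfolding G1_def by (meson max.coboundedI2)
    then have "2 * (\<kappa> t)\<^sup>2 * nrm2 (gA (zz t) ya yb) (gB (zz t) ya yb) \<le> 2 * (\<kappa> t)\<^sup>2 * G1"
      by (intro mult_left_mono) auto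
    also have "2 * (\<kappa> t)\<^sup>2 * G1 = \<kappa> t * (2 * \<kappa> t * G1)" by (simp add: power2_eq_square)
    also have "\<dots> \<le> \<kappa> t * e" using k(2) k0 by (intro mult_left_mono) auto
    finally have a3: "2 * (\<kappa> t)\<^sup>2 * nrm2 (gA (zz t) ya yb) (gB (zz t) ya yb) \<le> \<kappa> t * e" .
    show ?thesis using a1 a2 a3 by linarith
  qed
  have opt0: "optp as bs" unfolding optp_def fs_def using bs_feas by simp
  have "\<exists>T2\<ge>T1. fs - \<epsilon>1 < ff T2"
  proof (rule ccontr)
    assume neg: "\<not> (\<exists>T2\<ge>T1. fs - \<epsilon>1 < ff T2)"
    have dec: "\<forall>t\<ge>T1. V (Suc t) as bs \<le> V t as bs - \<kappa> t * \<epsilon>1"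
    proof (intro allI impI)
      fix t assume t: "T1 \<le> t"
      have "ff t \<le> fs - \<epsilon>1" using neg t by (simp add: not_less)
      then have u: "\<epsilon>1 \<le> fs - ff t" by simp
      have k0: "0 < \<kappa> t" using kpos by blast
      have "2 * \<kappa> t * \<epsilon>1 \<le> 2 * \<kappa> t * (fs - ff t)" using u k0 by (intro mult_left_mono) auto
      moreover have "\<kappa> t * e \<le> \<kappa> t * \<epsilon>1" using k0 unfolding e_def by (intro mult_left_mono) auto
      ultimately show "V (Suc t) as bs \<le> V t as bs - \<kappa> t * \<epsilon>1" using key[OF t opt0] by linarith
    qed
    show False
      by (rule descent[of "\<lambda>t. V t as bs" T1 \<kappa> \<epsilon>1, OF _ dec \<epsilon>1 kpos kdiv]) (simp add: V0)
  qed
  then obtain T2 where T2: "T1 \<le> T2" "fs - \<epsilon>1 < ff T2" by blast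
  have inv: "\<exists>ya yb. optp ya yb \<and> V t ya yb < \<delta>" if "T2 \<le> t" for t
    using that
  proof (induction t rule: dec_induct)
    case base
    obtain ya yb where "optp ya yb" "nrm2 (\<lambda>i. alpha T2 i - ya i) (\<lambda>i. beta T2 i - yb i) < \<delta> / 2"
      using EBf[rule_format, of "beta T2" "alpha T2"] feasI T2(2) unfolding ff_def by blast
    then show ?case unfolding V_def using \<delta>0 by (intro exI conjI) auto
  next
    case (step t)
    have t: "T1 \<le> t" using step.hyps T2(1) by simp
    have k0: "0 < \<kappa> t" using kpos by blast
    have kle: "\<kappa> t \<le> 1" using T1 t by blast
    show ?case
    proof (cases "fs - \<epsilon>1 < ff t")
      case True
      obtain ya yb where y: "optp ya yb" "V t ya yb < \<delta> / 2"
        using EBf[rule_format, of "beta t" "alpha t"] feasI True unfolding ff_def V_def by blast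
      have "V (Suc t) ya yb \<le> V t ya yb - 2 * \<kappa> t * (fs - ff t) + \<kappa> t * e" by (rule key[OF t y(1)])
      moreover have "0 \<le> 2 * \<kappa> t * (fs - ff t)" using ff_le[of t] k0 by simp
      moreover have "\<kappa> t * e \<le> 1 * e" using kle e_pos by (intro mult_right_mono) auto
      moreover have "e \<le> \<delta> / 2" unfolding e_def by simp
      ultimately have "V (Suc t) ya yb < \<delta>" using y(2) by linarith
      then show ?thesis using y(1) by blast
    next
      case False
      obtain ya yb where y: "optp ya yb" "V t ya yb < \<delta>" using step.IH by blast
      have "V (Suc t) ya yb \<le> V t ya yb - 2 * \<kappa> t * (fs - ff t) + \<kappa> t * e" by (rule key[OF t y(1)])
      moreover have "2 * \<kappa> t * \<epsilon>1 \<le> 2 * \<kappa> t * (fs - ff t)" using False k0 by (intro mult_left_mono) auto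
      moreover have "\<kappa> t * e \<le> \<kappa> t * \<epsilon>1" using k0 unfolding e_def by (intro mult_left_mono) auto
      moreover have "0 \<le> \<kappa> t * \<epsilon>1" using k0 \<epsilon>1 by simp
      ultimately have "V (Suc t) ya yb < \<delta>" using y(2) by linarith
      then show ?thesis using y(1) by blast
    qed
  qed
  show "\<forall>\<^sub>F t in sequentially. a < ff t"
    unfolding eventually_sequentially
  proof (intro exI[of _ T2] allI impI)
    fix t assume "T2 \<le> t"
    then obtain ya yb where y: "optp ya yb" "V t ya yb < \<delta>" using inv by blast
    have "fs - F (alpha t) (beta t) < \<epsilon>0"
      using \<delta>[rule_format, of "zz t" "alpha t" "beta t" ya yb] zZs zmin y unfolding V_def by blast
    then show "a < ff t" unfolding ff_def \<epsilon>0_def by simp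
  qed
qed

end

theorem proposition3p4:
  fixes n m k s :: nat
    and Q :: "nat \<Rightarrow> nat \<Rightarrow> real"
    and lam :: "nat \<Rightarrow> real"
    and v :: "nat \<Rightarrow> nat \<Rightarrow> real"
    and c :: "nat \<Rightarrow> real"
    and A :: "nat \<Rightarrow> nat \<Rightarrow> real"
    and b :: "nat \<Rightarrow> real"
    and \<eta> :: real
    and J :: "(nat \<Rightarrow> real) \<Rightarrow> (nat \<Rightarrow> real) \<Rightarrow> nat set"
    and \<kappa> :: "nat \<Rightarrow> real"
    and alpha beta z :: "nat \<Rightarrow> nat \<Rightarrow> real"
  assumes Q_sym: "\<forall>i<n. \<forall>j<n. Q i j = Q j i"
    and Q_psd: "\<forall>x. 0 \<le> (\<Sum>i<n. \<Sum>j<n. x i * Q i j * x j)"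
    and Q_eig: "\<forall>i<n. \<forall>j<n. Q i j = (\<Sum>l<n. lam l * v l i * v l j)"
    and v_orth: "\<forall>l<n. \<forall>l'<n. (\<Sum>j<n. v l j * v l' j) = (if l = l' then 1 else 0)"
    and lam_sorted: "\<forall>i j. i \<le> j \<and> j < n \<longrightarrow> lam j \<le> lam i"
    and lam_nonneg: "\<forall>i<n. 0 \<le> lam i"
    and eta_pos: "0 < \<eta>"
    and s_pos: "0 < s" and s_le: "s \<le> n"
    and k_le: "k \<le> n"
    and J_sel: "\<forall>\<alpha> \<beta>. J \<alpha> \<beta> \<subseteq> {..<n} \<and> card (J \<alpha> \<beta>) = s \<and>
                  (\<forall>i\<in>J \<alpha> \<beta>. \<forall>j\<in>{..<n} - J \<alpha> \<beta>.
                     \<bar>gam k m lam v A c \<alpha> \<beta> j\<bar> \<le> \<bar>gam k m lam v A c \<alpha> \<beta> i\<bar>)"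
    and dual_max: "\<exists>\<alpha>' \<beta>'. (\<alpha>', \<beta>') \<in> dual_feas m \<and>
                  (\<forall>\<alpha> \<beta>. (\<alpha>, \<beta>) \<in> dual_feas m \<longrightarrow>
                     fdual n m k s lam v A b c \<eta> \<alpha> \<beta> \<le> fdual n m k s lam v A b c \<eta> \<alpha>' \<beta>')"
    and kappa_pos: "\<forall>t. 0 < \<kappa> t"
    and kappa_lim: "\<kappa> \<longlonglongrightarrow> 0"
    and kappa_div: "\<not> summable \<kappa>"
    and beta0: "\<forall>i<m. 0 \<le> beta 0 i"
    and z_def: "\<forall>t. z t = indicator (J (alpha t) (beta t))"
    and alpha_step: "\<forall>t. \<forall>i<k. alpha (Suc t) i =
          (1 - \<kappa> t / 2) * alpha t i
          - \<eta> * \<kappa> t / 2 * sqrt (lam i) *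
              (\<Sum>j<n. v i j * z t j * gam k m lam v A c (alpha t) (beta t) j)"
    and beta_step: "\<forall>t. \<forall>i<m. beta (Suc t) i =
          max 0 (beta t i - \<kappa> t * b i
                 - \<eta> * \<kappa> t / 2 *
                     (\<Sum>j<n. A i j * z t j * gam k m lam v A c (alpha t) (beta t) j))"
  shows "(\<lambda>t. fdual n m k s lam v A b c \<eta> (alpha t) (beta t))
            \<longlonglongrightarrow> dval n m k s lam v A b c \<eta>
         \<and> (\<forall>zs. (\<exists>T. \<forall>t\<ge>T. z t = zs) \<longrightarrow>
               zs \<in> Zs n s
             \<and> inner_val n m k lam v A b c \<eta> zs = Jstar n m k s lam v A b c \<eta>
             \<and> ereal (dval n m k s lam v A b c \<eta>) = Jstar n m k s lam v A b c \<eta>)"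
proof -
  obtain \<alpha>' \<beta>' where df: "(\<alpha>', \<beta>') \<in> dual_feas m"
    and mx: "\<forall>\<alpha> \<beta>. (\<alpha>, \<beta>) \<in> dual_feas m \<longrightarrow>
                     fdual n m k s lam v A b c \<eta> \<alpha> \<beta> \<le> fdual n m k s lam v A b c \<eta> \<alpha>' \<beta>'"
    using dual_max by blast
  interpret P: prob n m k s lam v A b c \<eta>
    by unfold_locales (use eta_pos s_pos s_le in auto)
  interpret P2: prob2 n m k s lam v A b c \<eta> \<alpha>' \<beta>'
    by unfold_locales (use df mx in \<open>auto simp: dual_feas_def\<close>)
  have feasI: "\<forall>t. \<forall>i<m. 0 \<le> beta t i"
  proof
    fix t show "\<forall>i<m. 0 \<le> beta t i"
      by (induction t) (use beta0 beta_step in auto)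
  qed
  have zZs: "\<forall>t. z t \<in> Zs n s"
    using z_def J_sel P.ind_Zs by auto
  have zmin: "\<forall>t. fdual n m k s lam v A b c \<eta> (alpha t) (beta t) = Lfun n m k lam v A b c \<eta> (z t) (alpha t) (beta t)"
  proof
    fix t
    obtain z0 where z0: "z0 \<in> Zs n s" "fdual n m k s lam v A b c \<eta> (alpha t) (beta t) = Lfun n m k lam v A b c \<eta> z0 (alpha t) (beta t)"
      using P.F_att by blast
    have "Lfun n m k lam v A b c \<eta> (z t) (alpha t) (beta t) \<le> Lfun n m k lam v A b c \<eta> z0 (alpha t) (beta t)"
      unfolding z_def[rule_format] using J_sel z0(1) by (intro P.topsel) auto
    moreover have "fdual n m k s lam v A b c \<eta> (alpha t) (beta t) \<le> Lfun n m k lam v A b c \<eta> (z t) (alpha t) (beta t)"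
      using P.F_le zZs by blast
    ultimately show "fdual n m k s lam v A b c \<eta> (alpha t) (beta t) = Lfun n m k lam v A b c \<eta> (z t) (alpha t) (beta t)"
      using z0(2) by linarith
  qed
  have aupd: "\<forall>t. \<forall>i<k. alpha (Suc t) i = alpha t i + \<kappa> t * P.gA (z t) (alpha t) (beta t) i"
    using alpha_step unfolding P.gA_def by (auto simp: algebra_simps)
  have bupd: "\<forall>t. \<forall>i<m. beta (Suc t) i = max 0 (beta t i + \<kappa> t * P.gB (z t) (alpha t) (beta t) i)"
    using beta_step unfolding P.gB_def by (auto simp: algebra_simps)
  interpret I: iter n m k s lam v A b c \<eta> \<alpha>' \<beta>' alpha beta z \<kappa>
    by unfold_locales (use feasI zZs zmin aupd bupd kappa_pos kappa_lim kappa_div in auto)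
  have dv: "dval n m k s lam v A b c \<eta> = P2.fs"
    unfolding dval_def P2.fs_def
  proof (rule cSup_eq_maximum)
    show "fdual n m k s lam v A b c \<eta> \<alpha>' \<beta>' \<in> (\<lambda>p. fdual n m k s lam v A b c \<eta> (fst p) (snd p)) ` dual_feas m"
      by (rule image_eqI[of _ _ "(\<alpha>', \<beta>')"]) (use df in auto)
  qed (use mx in auto)
  have part1: "(\<lambda>t. fdual n m k s lam v A b c \<eta> (alpha t) (beta t)) \<longlonglongrightarrow> dval n m k s lam v A b c \<eta>"
    using I.part1 unfolding I.ff_def dv .
  have lowJ: "ereal P2.fs \<le> inner_val n m k lam v A b c \<eta> zz" if "zz \<in> Zs n s" for zz
  proof -
    have "ereal P2.fs \<le> ereal (Lfun n m k lam v A b c \<eta> zz \<alpha>' \<beta>')"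
      unfolding P2.fs_def using P.F_le[OF that] by simp
    also have "\<dots> \<le> inner_val n m k lam v A b c \<eta> zz"
      unfolding inner_val_def using df by (intro SUP_upper2[of "(\<alpha>', \<beta>')"]) auto
    finally show ?thesis .
  qed
  have JS: "ereal P2.fs \<le> Jstar n m k s lam v A b c \<eta>"
    unfolding Jstar_def using lowJ by (intro INF_greatest) auto
  show ?thesis
  proof (intro conjI part1 allI impI)
    fix zs assume "\<exists>T. \<forall>t\<ge>T. z t = zs"
    then obtain T where T: "\<forall>t\<ge>T. z t = zs" by blast
    have zs: "zs \<in> Zs n s" using zZs T by (metis order_refl)
    have up: "inner_val n m k lam v A b c \<eta> zs \<le> ereal P2.fs"
      unfolding inner_val_def
    proof (rule SUP_least)
      fix p assume "p \<in> dual_feas m"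
      then have "\<forall>i<m. 0 \<le> snd p i" unfolding dual_feas_def by auto
      then show "ereal (Lfun n m k lam v A b c \<eta> zs (fst p) (snd p)) \<le> ereal P2.fs"
        using I.part2[OF T] by simp
    qed
    have J1: "Jstar n m k s lam v A b c \<eta> \<le> inner_val n m k lam v A b c \<eta> zs"
      unfolding Jstar_def using zs by (rule INF_lower)
    show "zs \<in> Zs n s" by (rule zs)
    show "inner_val n m k lam v A b c \<eta> zs = Jstar n m k s lam v A b c \<eta>"
      using up J1 JS by (meson antisym order_trans)
    show "ereal (dval n m k s lam v A b c \<eta>) = Jstar n m k s lam v A b c \<eta>"
      unfolding dv using up J1 JS by (meson antisym order_trans)
  qed
qed

end
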